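(* Let $\bar\mu_0\ge0$. For every $1\le j\le k-1$ the operator $C^{(j)}$ below is well defined (the inverse exists) and $$G^\eta_{j+1}=a_j^2(L^j\eta)^{-4}\,G^\eta_jQ_{\Omega,j}^*\,C^{(j)}\,Q_{\Omega,j}G^\eta_j+G^\eta_j .$$ Consequently $$G_k(\Omega)=G^\eta_k=\sum_{j=1}^{k-1}a_j^2(L^j\eta)^{-4}\,G^\eta_jQ_{\Omega,j}^*\,C^{(j)}\,Q_{\Omega,j}G^\eta_j+G^\eta_1$$ (the sum being empty if $k=1$).
   Context: Setup: $d\ge1$, odd integer $L>1$, integers $k\ge1$, $m\ge k$, $\eta=L^{-k}$, $\Omega=\eta\{0,\dots,L^m-1\}^d$, $\Omega_j=(L^j\eta)\{0,\dots,L^{m-j}-1\}^d$ for $0\le j\le m$. $\mathcal L^2(\Omega)$ has inner product $\eta^d\sum_{x\in\Omega}\bar fg$ and $\mathcal L^2(\Omega_j)$ has $(L^j\eta)^d\sum_{y\in\Omega_j}\bar fg$. $B_j(y)=\{x\in\eta\mathbb Z^d: y_\mu\le x_\mu<y_\mu+L^j\eta\ \forall\mu\}$; $Q_{\Omega,j}:\mathcal L^2(\Omega)\to\mathcal L^2(\Omega_j)$, $(Q_{\Omega,j}f)(y)=L^{-jd}\sum_{x\in B_j(y)}f(x)$, with adjoint $(Q_{\Omega,j}^*h)(x)=h(y_x)$, $x\in B_j(y_x)$. The one-step averaging $Q_{\Omega_j}:\mathcal L^2(\Omega_j)\to\mathcal L^2(\Omega_{j+1})$ is $(Q_{\Omega_j}\psi)(y)=L^{-d}\sum_{y'\in\Omega_j\cap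 B_{j+1}(y)}\psi(y')$. Neumann Laplacian $(\Delta^\eta_\Omega f)(x)=\eta^{-2}\sum_\mu(f(x+\eta e_\mu)-2f(x)+f(x-\eta e_\mu))$ with $f(x\pm\eta e_\mu):=f(x)$ if $x\pm\eta e_\mu\notin\Omega$. Fix $a\in(0,1]$, $a_j=a\frac{1-L^{-2}}{1-L^{-2j}}$, $\bar\mu_j=L^{2j}\bar\mu_0$. Define $G^\eta_j=\big(-\Delta^\eta_\Omega+\bar\mu_k+a_j(L^j\eta)^{-2}Q_{\Omega,j}^*Q_{\Omega,j}\big)^{-1}$ (note $G^\eta_k=G_k(\Omega)=(-\Delta^\eta_\Omega+\bar\mu_k+a_kQ_{\Omega,k}^*Q_{\Omega,k})^{-1}$), $\Delta^{(j)}=a_j(L^j\eta)^{-2}-a_j^2(L^j\eta)^{-4}Q_{\Omega,j}G^\eta_jQ_{\Omega,j}^*$ on $\mathcal L^2(\Omega_j)$, and $C^{(j)}=\big(\Delta^{(j)}+a(L^{j+1}\eta)^{-2}Q_{\Omega_j}^*Q_{\Omega_j}\big)^{-1}$ on $\mathcal L^2(\Omega_j)$. *)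

theory Defs
  imports "HOL-Analysis.Analysis"
begin

(* Points of the lattice eta Z^d are represented by their real coordinates,
   x :: real^'d, where the finite type 'd indexes the d directions (d = CARD('d)).
   Functions on a finite set S of points are functions  real^'d => real  vanishing off S. *)

type_synonym ('d) fn = "real^('d::finite) \<Rightarrow> real"

definition eta :: "nat \<Rightarrow> nat \<Rightarrow> real" where
  "eta L k = 1 / real L ^ k"

definition Lat :: "real \<Rightarrow> nat \<Rightarrow> (real^('d::finite)) set" where
  "Lat s N = {x. \<forall>\<mu>. \<exists>n::nat. n < N \<and> x $ \<mu> = s * real n}"

definition Omega :: "nat \<Rightarrow> nat \<Rightarrow> nat \<Rightarrow> (real^('d::finite)) set" where
  "Omega L k m = Lat (eta L k) (L ^ m)"

definition OmegaJ :: "nat \<Rightarrow> nat \<Rightarrow> nat \<Rightarrow> nat \<Rightarrow> (real^('d::finite)) set" where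
  "OmegaJ L k m j = Lat (real L ^ j * eta L k) (L ^ (m - j))"

definition Bj :: "nat \<Rightarrow> nat \<Rightarrow> nat \<Rightarrow> real^'d \<Rightarrow> (real^('d::finite)) set" where
  "Bj L k j y = {x. (\<forall>\<mu>. \<exists>n::int. x $ \<mu> = eta L k * of_int n) \<and>
       (\<forall>\<mu>. y $ \<mu> \<le> x $ \<mu> \<and> x $ \<mu> < y $ \<mu> + real L ^ j * eta L k)}"

definition sp :: "(real^('d::finite)) set \<Rightarrow> ('d::finite) fn set" where
  "sp S = {f. \<forall>x. x \<notin> S \<longrightarrow> f x = 0}"

definition invertible_on :: "(real^('d::finite)) set \<Rightarrow> (('d::finite) fn \<Rightarrow> ('d::finite) fn) \<Rightarrow> bool" where
  "invertible_on S A \<longleftrightarrow> bij_betw A (sp S) (sp S)"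

definition inv_on :: "(real^('d::finite)) set \<Rightarrow> (('d::finite) fn \<Rightarrow> ('d::finite) fn) \<Rightarrow> (('d::finite) fn \<Rightarrow> ('d::finite) fn)" where
  "inv_on S A = the_inv_into (sp S) A"

definition QO :: "nat \<Rightarrow> nat \<Rightarrow> nat \<Rightarrow> nat \<Rightarrow> ('d::finite) fn \<Rightarrow> ('d::finite) fn" where
  "QO L k m j f = (\<lambda>y. if y \<in> OmegaJ L k m j
      then (1 / real L ^ (j * CARD('d))) * (\<Sum>x\<in>Bj L k j y. f x) else 0)"

definition QOadj :: "nat \<Rightarrow> nat \<Rightarrow> nat \<Rightarrow> nat \<Rightarrow> ('d::finite) fn \<Rightarrow> ('d::finite) fn" where
  "QOadj L k m j h = (\<lambda>x. if x \<in> Omega L k m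
      then h (THE y. y \<in> OmegaJ L k m j \<and> x \<in> Bj L k j y) else 0)"

definition Qstep :: "nat \<Rightarrow> nat \<Rightarrow> nat \<Rightarrow> nat \<Rightarrow> ('d::finite) fn \<Rightarrow> ('d::finite) fn" where
  "Qstep L k m j \<psi> = (\<lambda>y. if y \<in> OmegaJ L k m (j + 1)
      then (1 / real L ^ CARD('d)) * (\<Sum>y'\<in>OmegaJ L k m j \<inter> Bj L k (j + 1) y. \<psi> y') else 0)"

definition Qstepadj :: "nat \<Rightarrow> nat \<Rightarrow> nat \<Rightarrow> nat \<Rightarrow> ('d::finite) fn \<Rightarrow> ('d::finite) fn" where
  "Qstepadj L k m j h = (\<lambda>y'. if y' \<in> OmegaJ L k m j
      then h (THE y. y \<in> OmegaJ L k m (j + 1) \<and> y' \<in> Bj L k (j + 1) y) else 0)"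

text \<open>Neumann Laplacian on Omega.\<close>
definition nb :: "(real^('d::finite)) set \<Rightarrow> ('d::finite) fn \<Rightarrow> real^'d \<Rightarrow> real^'d \<Rightarrow> real" where
  "nb S f x v = (if x + v \<in> S then f (x + v) else f x)"

definition Lap :: "nat \<Rightarrow> nat \<Rightarrow> nat \<Rightarrow> ('d::finite) fn \<Rightarrow> ('d::finite) fn" where
  "Lap L k m f = (\<lambda>x. if x \<in> Omega L k m then
      (1 / eta L k ^ 2) * (\<Sum>\<mu>\<in>UNIV.
         nb (Omega L k m) f x (eta L k *\<^sub>R axis \<mu> 1) - 2 * f x
         + nb (Omega L k m) f x (- (eta L k *\<^sub>R axis \<mu> 1)))
      else 0)"

definition aj :: "real \<Rightarrow> nat \<Rightarrow> nat \<Rightarrow> real" where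
  "aj a L j = a * (1 - 1 / real L ^ 2) / (1 - 1 / real L ^ (2 * j))"

definition mubar :: "real \<Rightarrow> nat \<Rightarrow> nat \<Rightarrow> real" where
  "mubar mu0 L j = real L ^ (2 * j) * mu0"

definition Aop :: "nat \<Rightarrow> nat \<Rightarrow> nat \<Rightarrow> real \<Rightarrow> real \<Rightarrow> nat \<Rightarrow> ('d::finite) fn \<Rightarrow> ('d::finite) fn" where
  "Aop L k m a mu0 j f = (\<lambda>x. if x \<in> Omega L k m then
      - Lap L k m f x + mubar mu0 L k * f x
      + aj a L j / (real L ^ j * eta L k) ^ 2 * QOadj L k m j (QO L k m j f) x else 0)"

definition Geta :: "nat \<Rightarrow> nat \<Rightarrow> nat \<Rightarrow> real \<Rightarrow> real \<Rightarrow> nat \<Rightarrow> ('d::finite) fn \<Rightarrow> ('d::finite) fn" where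
  "Geta L k m a mu0 j = inv_on (Omega L k m) (Aop L k m a mu0 j)"

definition GkOmega :: "nat \<Rightarrow> nat \<Rightarrow> nat \<Rightarrow> real \<Rightarrow> real \<Rightarrow> ('d::finite) fn \<Rightarrow> ('d::finite) fn" where
  "GkOmega L k m a mu0 = inv_on (Omega L k m) (\<lambda>f x. if x \<in> Omega L k m then
      - Lap L k m f x + mubar mu0 L k * f x
      + aj a L k * QOadj L k m k (QO L k m k f) x else 0)"

definition Delta :: "nat \<Rightarrow> nat \<Rightarrow> nat \<Rightarrow> real \<Rightarrow> real \<Rightarrow> nat \<Rightarrow> ('d::finite) fn \<Rightarrow> ('d::finite) fn" where
  "Delta L k m a mu0 j \<psi> = (\<lambda>y. if y \<in> OmegaJ L k m j then
      aj a L j / (real L ^ j * eta L k) ^ 2 * \<psi> y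
      - (aj a L j) ^ 2 / (real L ^ j * eta L k) ^ 4
          * QO L k m j (Geta L k m a mu0 j (QOadj L k m j \<psi>)) y else 0)"

definition Cpre :: "nat \<Rightarrow> nat \<Rightarrow> nat \<Rightarrow> real \<Rightarrow> real \<Rightarrow> nat \<Rightarrow> ('d::finite) fn \<Rightarrow> ('d::finite) fn" where
  "Cpre L k m a mu0 j \<psi> = (\<lambda>y. if y \<in> OmegaJ L k m j then
      Delta L k m a mu0 j \<psi> y
      + a / (real L ^ (j + 1) * eta L k) ^ 2 * Qstepadj L k m j (Qstep L k m j \<psi>) y else 0)"

definition Cj :: "nat \<Rightarrow> nat \<Rightarrow> nat \<Rightarrow> real \<Rightarrow> real \<Rightarrow> nat \<Rightarrow> ('d::finite) fn \<Rightarrow> ('d::finite) fn" where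
  "Cj L k m a mu0 j = inv_on (OmegaJ L k m j) (Cpre L k m a mu0 j)"

definition Term :: "nat \<Rightarrow> nat \<Rightarrow> nat \<Rightarrow> real \<Rightarrow> real \<Rightarrow> nat \<Rightarrow> ('d::finite) fn \<Rightarrow> ('d::finite) fn" where
  "Term L k m a mu0 j f = (\<lambda>x. (aj a L j) ^ 2 / (real L ^ j * eta L k) ^ 4 *
      Geta L k m a mu0 j (QOadj L k m j (Cj L k m a mu0 j (QO L k m j (Geta L k m a mu0 j f)))) x)"

end

theory Submission
  imports Defs "HOL-Library.Function_Algebras"
begin

instantiation "fun" :: (type, real_vector) real_vector
begin
definition scaleR_fun :: "real \<Rightarrow> ('a \<Rightarrow> 'b) \<Rightarrow> 'a \<Rightarrow> 'b" where
  "scaleR_fun c f = (\<lambda>x. c *\<^sub>R f x)"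
instance by standard (auto simp: scaleR_fun_def plus_fun_def scaleR_add_right scaleR_add_left)
end
lemma scaleR_fun_apply[simp]: "(c *\<^sub>R f) x = c *\<^sub>R f x" by (simp add: scaleR_fun_def)

lemma inj_surj_span:
  fixes T :: "'v::real_vector \<Rightarrow> 'v"
  assumes X: "finite X" and lin: "linear T" and into: "T ` span X \<subseteq> span X"
    and inj: "inj_on T (span X)"
  shows "T ` span X = span X"
proof -
  obtain B where B: "B \<subseteq> span X" "independent B" "span X \<subseteq> span B" "card B = dim (span X)"
    using basis_exists by blast
  have fB: "finite B" and cB: "card B \<le> card X"
    using independent_span_bound[OF X B(2) B(1)] by auto
  have spB: "span B = span X"
  proof
    show "span B \<subseteq> span X" using B(1) by (simp add: span_minimal subspace_span)
  qed (use B(3) in simp)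
  have indT: "independent (T ` B)"
    using linear_independent_injective_image[OF lin B(2)] inj spB by simp
  have cTB: "card (T ` B) = card B"
    using inj B(1) by (meson card_image inj_on_subset)
  have "span X \<subseteq> span (T ` B)"
  proof
    fix w assume w: "w \<in> span X"
    show "w \<in> span (T ` B)"
    proof (rule ccontr)
      assume nw: "w \<notin> span (T ` B)"
      then have ind2: "independent (insert w (T ` B))"
        using indT independent_insertI by blast
      have sub: "insert w (T ` B) \<subseteq> span B"
        using w spB into B(1) span_superset by fastforce
      have "card (insert w (T ` B)) \<le> card B"
        using independent_span_bound[OF fB ind2 sub] by auto
      moreover have "card (insert w (T ` B)) = card B + 1"
      proof -
        have "w \<notin> T ` B"
        proof
          assume "w \<in> T ` B"
          then have "w \<in> span (T ` B)" by (rule span_base)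
          with nw show False by simp
        qed
        then have "card (insert w (T ` B)) = Suc (card (T ` B))"
          using fB by simp
        then show ?thesis using cTB by simp
      qed
      ultimately show False by simp
    qed
  qed
  also have "span (T ` B) = T ` span B"
    using linear_span_image[OF lin] by simp
  finally show ?thesis using into spB by blast
qed


lemma lin_diff:
  assumes "subspace V" "\<And>x y. x\<in>V \<Longrightarrow> y\<in>V \<Longrightarrow> T (x+y) = T x + T y"
    "\<And>r x. x\<in>V \<Longrightarrow> T (r *\<^sub>R x) = r *\<^sub>R (T x :: 'w::real_vector)" "x\<in>V" "y\<in>V"
  shows "T (x - y) = T x - T y"
proof -
  have xy: "x - y \<in> V" using assms(1,4,5) subspace_diff by blast
  have "T x = T ((x - y) + y)" by simp
  also have "\<dots> = T (x - y) + T y" using assms(2)[OF xy assms(5)] .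
  finally show ?thesis by (simp add: algebra_simps)
qed

locale wb =
  fixes V W :: "'v::real_vector set" and A A' Q Qa P S :: "'v \<Rightarrow> 'v" and B c :: real
  assumes sV: "subspace V" and sW: "subspace W"
  and A_add: "\<And>x y. x\<in>V \<Longrightarrow> y\<in>V \<Longrightarrow> A (x+y) = A x + A y"
  and A_sc: "\<And>r x. x\<in>V \<Longrightarrow> A (r *\<^sub>R x) = r *\<^sub>R A x"
  and A'_add: "\<And>x y. x\<in>V \<Longrightarrow> y\<in>V \<Longrightarrow> A' (x+y) = A' x + A' y"
  and A'_sc: "\<And>r x. x\<in>V \<Longrightarrow> A' (r *\<^sub>R x) = r *\<^sub>R A' x"
  and Q_add: "\<And>x y. x\<in>V \<Longrightarrow> y\<in>V \<Longrightarrow> Q (x+y) = Q x + Q y"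
  and Q_sc: "\<And>r x. x\<in>V \<Longrightarrow> Q (r *\<^sub>R x) = r *\<^sub>R Q x"
  and Qa_add: "\<And>x y. x\<in>W \<Longrightarrow> y\<in>W \<Longrightarrow> Qa (x+y) = Qa x + Qa y"
  and Qa_sc: "\<And>r x. x\<in>W \<Longrightarrow> Qa (r *\<^sub>R x) = r *\<^sub>R Qa x"
  and P_add: "\<And>x y. x\<in>W \<Longrightarrow> y\<in>W \<Longrightarrow> P (x+y) = P x + P y"
  and P_sc: "\<And>r x. x\<in>W \<Longrightarrow> P (r *\<^sub>R x) = r *\<^sub>R P x"
  and bijA: "bij_betw A V V" and bijA': "bij_betw A' V V"
  and QV: "\<And>x. x\<in>V \<Longrightarrow> Q x \<in> W" and QaW: "\<And>x. x\<in>W \<Longrightarrow> Qa x \<in> V"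
  and PW: "\<And>x. x\<in>W \<Longrightarrow> P x \<in> W"
  and PP: "\<And>x. x\<in>W \<Longrightarrow> P (P x) = P x"
  and Bpos: "B > 0" and cpos: "c > 0"
  and A'_eq: "\<And>x. x\<in>V \<Longrightarrow> A' x = A x - B *\<^sub>R Qa (Q x) + (B*c/(B+c)) *\<^sub>R Qa (P (Q x))"
  and S_eq: "\<And>w. w\<in>W \<Longrightarrow> S w = B *\<^sub>R w + c *\<^sub>R P w - B^2 *\<^sub>R Q (the_inv_into V A (Qa w))"
begin

abbreviation "G \<equiv> the_inv_into V A"
abbreviation "G' \<equiv> the_inv_into V A'"

lemma V_add[simp]: "x\<in>V \<Longrightarrow> y\<in>V \<Longrightarrow> x + y \<in> V" using sV subspace_add by blast
lemma V_sc[simp]: "x\<in>V \<Longrightarrow> r *\<^sub>R x \<in> V" using sV subspace_scale by blast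
lemma V_diff[simp]: "x\<in>V \<Longrightarrow> y\<in>V \<Longrightarrow> x - y \<in> V" using sV subspace_diff by blast
lemma W_add[simp]: "x\<in>W \<Longrightarrow> y\<in>W \<Longrightarrow> x + y \<in> W" using sW subspace_add by blast
lemma W_sc[simp]: "x\<in>W \<Longrightarrow> r *\<^sub>R x \<in> W" using sW subspace_scale by blast
lemma W_diff[simp]: "x\<in>W \<Longrightarrow> y\<in>W \<Longrightarrow> x - y \<in> W" using sW subspace_diff by blast

lemmas memb[simp] = QV QaW PW
lemmas lin[simp] = A_add A_sc A'_add A'_sc Q_add Q_sc Qa_add Qa_sc P_add P_sc

lemma Q_diff[simp]: "x\<in>V \<Longrightarrow> y\<in>V \<Longrightarrow> Q (x - y) = Q x - Q y"
  by (rule lin_diff[OF sV]) simp_all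
lemma Qa_diff[simp]: "x\<in>W \<Longrightarrow> y\<in>W \<Longrightarrow> Qa (x - y) = Qa x - Qa y"
  by (rule lin_diff[OF sW]) simp_all
lemma P_diff[simp]: "x\<in>W \<Longrightarrow> y\<in>W \<Longrightarrow> P (x - y) = P x - P y"
  by (rule lin_diff[OF sW]) simp_all

lemma inv_props:
  assumes bij: "bij_betw T V V" and add: "\<And>x y. x\<in>V \<Longrightarrow> y\<in>V \<Longrightarrow> T (x+y) = T x + T y"
    and sc: "\<And>r x. x\<in>V \<Longrightarrow> T (r *\<^sub>R x) = r *\<^sub>R T x"
  shows "\<And>x. x\<in>V \<Longrightarrow> the_inv_into V T x \<in> V"
    and "\<And>x. x\<in>V \<Longrightarrow> T (the_inv_into V T x) = x"
    and "\<And>x. x\<in>V \<Longrightarrow> the_inv_into V T (T x) = x"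
    and "\<And>x y. x\<in>V \<Longrightarrow> y\<in>V \<Longrightarrow> the_inv_into V T (x+y) = the_inv_into V T x + the_inv_into V T y"
    and "\<And>r x. x\<in>V \<Longrightarrow> the_inv_into V T (r *\<^sub>R x) = r *\<^sub>R the_inv_into V T x"
proof -
  have inj: "inj_on T V" and im: "T ` V = V" using bij by (auto simp: bij_betw_def)
  show 1: "\<And>x. x\<in>V \<Longrightarrow> the_inv_into V T x \<in> V"
    using inj im the_inv_into_into by (metis order_refl)
  show 2: "\<And>x. x\<in>V \<Longrightarrow> T (the_inv_into V T x) = x"
    using inj im f_the_inv_into_f by (metis)
  show "\<And>x. x\<in>V \<Longrightarrow> the_inv_into V T (T x) = x"
    using inj the_inv_into_f_f by metis
  show "\<And>x y. x\<in>V \<Longrightarrow> y\<in>V \<Longrightarrow> the_inv_into V T (x+y) = the_inv_into V T x + the_inv_into V T y"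
    by (rule the_inv_into_f_eq[OF inj]) (simp_all add: add 1 2 V_add)
  show "\<And>r x. x\<in>V \<Longrightarrow> the_inv_into V T (r *\<^sub>R x) = r *\<^sub>R the_inv_into V T x"
    by (rule the_inv_into_f_eq[OF inj]) (simp_all add: sc 1 2)
qed

lemmas Gp[simp] = inv_props[OF bijA A_add A_sc]
lemmas G'p[simp] = inv_props[OF bijA' A'_add A'_sc]

lemma G_diff[simp]: "x\<in>V \<Longrightarrow> y\<in>V \<Longrightarrow> G (x - y) = G x - G y"
  by (rule lin_diff[OF sV]) simp_all
lemma G'_diff[simp]: "x\<in>V \<Longrightarrow> y\<in>V \<Longrightarrow> G' (x - y) = G' x - G' y"
  by (rule lin_diff[OF sV]) simp_all

definition D :: "'v \<Rightarrow> 'v" where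
  "D w = (1/B) *\<^sub>R (w - P w) + (1/(B+c)) *\<^sub>R P w"

lemma DW[simp]: "w\<in>W \<Longrightarrow> D w \<in> W" by (simp add: D_def)
lemma D_add[simp]: "x\<in>W \<Longrightarrow> y\<in>W \<Longrightarrow> D (x+y) = D x + D y"
  by (simp add: D_def algebra_simps)
lemma D_sc[simp]: "x\<in>W \<Longrightarrow> D (r *\<^sub>R x) = r *\<^sub>R D x"
  by (simp add: D_def algebra_simps)
lemma D_diff[simp]: "x\<in>W \<Longrightarrow> y\<in>W \<Longrightarrow> D (x - y) = D x - D y"
  by (rule lin_diff[OF sW]) simp_all

lemma vec_id: "B^2 *\<^sub>R ((1/B) *\<^sub>R (a - b) + (1/(B+c)) *\<^sub>R b) = B *\<^sub>R a - (B*c/(B+c)) *\<^sub>R (b::'v)"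
proof -
  have "B^2 *\<^sub>R ((1/B) *\<^sub>R (a - b) + (1/(B+c)) *\<^sub>R b) = (B^2*(1/B)) *\<^sub>R a + (B^2/(B+c) - B^2*(1/B)) *\<^sub>R b"
    by (simp add: algebra_simps)
  moreover have "B^2*(1/B) = B" using Bpos by (simp add: power2_eq_square)
  moreover have "B^2/(B+c) - B^2*(1/B) = -(B*c/(B+c))" using Bpos cpos by (simp add: field_simps power2_eq_square)
  ultimately have "B^2 *\<^sub>R ((1/B) *\<^sub>R (a - b) + (1/(B+c)) *\<^sub>R b) = B *\<^sub>R a + (-(B*c/(B+c))) *\<^sub>R b"
    by metis
  then show ?thesis by simp
qed

lemma A'_D: "x\<in>V \<Longrightarrow> A' x = A x - B^2 *\<^sub>R Qa (D (Q x))"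
proof -
  assume x: "x\<in>V"
  have "Qa (D (Q x)) = (1/B) *\<^sub>R (Qa (Q x) - Qa (P (Q x))) + (1/(B+c)) *\<^sub>R Qa (P (Q x))"
    using x by (simp add: D_def)
  then have eq: "B^2 *\<^sub>R Qa (D (Q x)) = B *\<^sub>R Qa (Q x) - (B*c/(B+c)) *\<^sub>R Qa (P (Q x))"
    by (simp add: vec_id)
  have "A x - B^2 *\<^sub>R Qa (D (Q x)) = A x - (B *\<^sub>R Qa (Q x) - (B*c/(B+c)) *\<^sub>R Qa (P (Q x)))"
    by (simp only: eq)
  also have "\<dots> = A x - B *\<^sub>R Qa (Q x) + (B*c/(B+c)) *\<^sub>R Qa (P (Q x))"
    by (simp add: algebra_simps)
  finally show ?thesis using A'_eq[OF x] by simp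
qed

lemma key1: "x\<in>V \<Longrightarrow> G' x = G x + B^2 *\<^sub>R G (Qa (D (Q (G' x))))"
proof -
  assume x: "x\<in>V"
  define g where "g = G' x"
  have g: "g \<in> V" "A' g = x" using x by (simp_all add: g_def)
  have "A g = x + B^2 *\<^sub>R Qa (D (Q g))" using A'_D[OF g(1)] g(2) by (simp add: algebra_simps)
  then have "G (A g) = G (x + B^2 *\<^sub>R Qa (D (Q g)))" by simp
  then show ?thesis using g x by (simp add: g_def)
qed

lemma key2: "x\<in>V \<Longrightarrow> G' x = G x + B^2 *\<^sub>R G' (Qa (D (Q (G x))))"
proof -
  assume x: "x\<in>V"
  have "A' (G x) = x - B^2 *\<^sub>R Qa (D (Q (G x)))" using A'_D[of "G x"] x by simp
  then have "G' (A' (G x)) = G' (x - B^2 *\<^sub>R Qa (D (Q (G x))))" by simp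
  then have "G x = G' x - B^2 *\<^sub>R G' (Qa (D (Q (G x))))" using x by simp
  then show ?thesis by (simp add: algebra_simps)
qed

lemma PD: "w\<in>W \<Longrightarrow> P (D w) = (1/(B+c)) *\<^sub>R P w"
proof -
  assume w: "w\<in>W"
  have "B + c \<noteq> 0" using Bpos cpos by simp
  then show ?thesis using w by (simp add: D_def PP)
qed

lemma ED: "w\<in>W \<Longrightarrow> B *\<^sub>R D w + c *\<^sub>R P (D w) = w"
proof -
  assume w: "w\<in>W"
  have "B *\<^sub>R D w + c *\<^sub>R P (D w) = (B*(1/B)) *\<^sub>R (w - P w) + (B/(B+c) + c/(B+c)) *\<^sub>R P w"
    using w by (simp add: PD D_def PP algebra_simps)
  also have "B*(1/B) = 1" using Bpos by simp
  also have "B/(B+c) + c/(B+c) = 1" using Bpos cpos by (simp add: add_divide_distrib[symmetric])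
  finally show ?thesis by simp
qed

lemma DE: "w\<in>W \<Longrightarrow> D (B *\<^sub>R w + c *\<^sub>R P w) = w"
proof -
  assume w: "w\<in>W"
  have "D (B *\<^sub>R w + c *\<^sub>R P w) = B *\<^sub>R D w + c *\<^sub>R D (P w)" using w by simp
  moreover have "D (P w) = P (D w)" using w by (simp add: D_def PP PD)
  ultimately show ?thesis using ED[OF w] by simp
qed

definition C :: "'v \<Rightarrow> 'v" where
  "C w = D w + B^2 *\<^sub>R D (Q (G' (Qa (D w))))"

lemma CW[simp]: "w\<in>W \<Longrightarrow> C w \<in> W" by (simp add: C_def)
lemma SW[simp]: "w\<in>W \<Longrightarrow> S w \<in> W" by (simp add: S_eq)
lemma S_add: "x\<in>W \<Longrightarrow> y\<in>W \<Longrightarrow> S (x+y) = S x + S y"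
  by (simp add: S_eq algebra_simps)
lemma S_sc: "x\<in>W \<Longrightarrow> S (r *\<^sub>R x) = r *\<^sub>R S x"
  by (simp add: S_eq algebra_simps)

lemma SD: "w\<in>W \<Longrightarrow> S (D w) = w - B^2 *\<^sub>R Q (G (Qa (D w)))"
proof -
  assume w: "w\<in>W"
  have "S (D w) = (B *\<^sub>R D w + c *\<^sub>R P (D w)) - B^2 *\<^sub>R Q (G (Qa (D w)))"
    using S_eq[OF DW[OF w]] by simp
  then show ?thesis by (simp only: ED[OF w])
qed

lemma SC: "w\<in>W \<Longrightarrow> S (C w) = w"
proof -
  assume w: "w\<in>W"
  define u where "u = Qa (D w)"
  have u: "u \<in> V" using w by (simp add: u_def)
  define z where "z = Q (G' u)"
  have z: "z \<in> W" using u by (simp add: z_def)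
  have "S (C w) = S (D w) + B^2 *\<^sub>R S (D z)"
    using w z by (simp add: C_def S_add S_sc z_def u_def)
  also have "\<dots> = w - B^2 *\<^sub>R Q (G u) + B^2 *\<^sub>R (z - B^2 *\<^sub>R Q (G (Qa (D z))))"
    using w z by (simp add: SD u_def)
  also have "z - B^2 *\<^sub>R Q (G (Qa (D z))) = Q (G' u - B^2 *\<^sub>R G (Qa (D (Q (G' u)))))"
    using u by (simp add: z_def)
  also have "G' u - B^2 *\<^sub>R G (Qa (D (Q (G' u)))) = G u" using key1[OF u] by (simp add: algebra_simps)
  finally show ?thesis by simp
qed

lemma CS: "w\<in>W \<Longrightarrow> C (S w) = w"
proof -
  assume w: "w\<in>W"
  define u where "u = Qa w"
  have u: "u \<in> V" using w by (simp add: u_def)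
  have "D (S w) = D (B *\<^sub>R w + c *\<^sub>R P w) - B^2 *\<^sub>R D (Q (G u))"
    using w u by (simp add: S_eq u_def)
  then have DS: "D (S w) = w - B^2 *\<^sub>R D (Q (G u))"
    by (simp only: DE[OF w])
  have "C (S w) = D (S w) + B^2 *\<^sub>R D (Q (G' (Qa (D (S w)))))"
    by (simp add: C_def)
  also have "\<dots> = w - B^2 *\<^sub>R D (Q (G u)) + B^2 *\<^sub>R D (Q (G' u - B^2 *\<^sub>R G' (Qa (D (Q (G u))))))"
    using w u by (simp add: DS u_def)
  also have "G' u - B^2 *\<^sub>R G' (Qa (D (Q (G u)))) = G u" using key2[OF u] by (simp add: algebra_simps)
  finally show ?thesis by simp
qed

lemma S_bij: "bij_betw S W W"
proof (rule bij_betwI')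
  show "\<And>x y. x\<in>W \<Longrightarrow> y\<in>W \<Longrightarrow> (S x = S y) = (x = y)" by (metis CS)
  show "\<And>x. x\<in>W \<Longrightarrow> S x \<in> W" by simp
  show "\<And>y. y\<in>W \<Longrightarrow> \<exists>x\<in>W. y = S x" by (metis CW SC)
qed

lemma S_inv: "w\<in>W \<Longrightarrow> the_inv_into W S w = C w"
  by (rule the_inv_into_f_eq) (use S_bij SC in \<open>auto simp: bij_betw_def\<close>)

lemma main_id: "x\<in>V \<Longrightarrow> G' x = G x + B^2 *\<^sub>R G (Qa (the_inv_into W S (Q (G x))))"
proof -
  assume x: "x\<in>V"
  have "C (Q (G x)) = D (Q (G x + B^2 *\<^sub>R G' (Qa (D (Q (G x))))))"
    using x by (simp add: C_def)
  also have "G x + B^2 *\<^sub>R G' (Qa (D (Q (G x)))) = G' x" using key2[OF x] by simp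
  finally have "C (Q (G x)) = D (Q (G' x))" .
  then show ?thesis using key1[OF x] x by (simp add: S_inv)
qed

end


lemma nl1: "0 < (p::nat) \<Longrightarrow> p dvd s \<Longrightarrow> s \<le> n \<Longrightarrow> n < s + p \<Longrightarrow> n div p * p = s"
proof -
  assume p: "0 < p" and d: "p dvd s" and sn: "s \<le> n" and ns: "n < s + p"
  obtain a where "s = p * a" using d by (rule dvdE)
  then have a: "s = a * p" by simp
  have "n = (n - s) + a * p" using sn a by simp
  then have "n div p = ((n - s) + a * p) div p" by simp
  also have "\<dots> = a + (n - s) div p" using p by simp
  also have "(n - s) div p = 0" using ns sn by simp
  finally show ?thesis using a by simp
qed

lemma nl2: "0 < (p::nat) \<Longrightarrow> p dvd s \<Longrightarrow> p dvd N \<Longrightarrow> s < N \<Longrightarrow> s + p \<le> N"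
  by (metis add_less_cancel_left dvd_add_right_iff less_imp_add_positive
    linorder_le_less_linear nat_dvd_not_less)

lemma nl4: "0 < (p::nat) \<Longrightarrow> 0 < L \<Longrightarrow> (n div p * p) div (p * L) = n div (p * L)"
  by (simp add: div_mult2_eq)

definition cd :: "nat \<Rightarrow> nat \<Rightarrow> real^'d::finite \<Rightarrow> 'd \<Rightarrow> nat" where
  "cd L k x \<mu> = nat \<lfloor>x$\<mu> / eta L k\<rfloor>"

definition Yr :: "nat \<Rightarrow> nat \<Rightarrow> nat \<Rightarrow> real^'d::finite \<Rightarrow> real^'d" where
  "Yr L k j x = (\<chi> \<mu>. eta L k * real (cd L k x \<mu> div L^j * L^j))"

locale latt =
  fixes L k m :: nat
  assumes L1: "L > 1"
begin

abbreviation "e \<equiv> eta L k"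

lemma e_pos: "e > 0" using L1 by (simp add: eta_def)

lemma cd_eq: "x$\<mu> = e * real t \<Longrightarrow> cd L k x \<mu> = t"
  using e_pos by (simp add: cd_def)

lemma Om_iff: "x \<in> Omega L k m \<longleftrightarrow> (\<forall>\<mu>. \<exists>n. n < L^m \<and> x$\<mu> = e * real n)"
  by (simp add: Omega_def Lat_def)

lemma Om_cd: "x \<in> Omega L k m \<Longrightarrow> x$\<mu> = e * real (cd L k x \<mu>) \<and> cd L k x \<mu> < L^m"
  using cd_eq by (metis Om_iff)

lemma OmJ_iff: assumes j: "j \<le> m"
  shows "x \<in> OmegaJ L k m j \<longleftrightarrow> (\<forall>\<mu>. \<exists>n. n < L^m \<and> L^j dvd n \<and> x$\<mu> = e * real n)"
proof -
  have Lm: "L^m = L^j * L^(m-j)" using j by (simp add: power_add[symmetric])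
  have Lj: "L^j > 0" using L1 by simp
  have "(\<exists>s::nat. s < L^(m-j) \<and> x$\<mu> = real L ^ j * e * real s) \<longleftrightarrow>
        (\<exists>n. n < L^m \<and> L^j dvd n \<and> x$\<mu> = e * real n)" for \<mu>
  proof
    assume "\<exists>s::nat. s < L^(m-j) \<and> x$\<mu> = real L ^ j * e * real s"
    then obtain s where s: "s < L^(m-j)" "x$\<mu> = real L ^ j * e * real s" by blast
    have "L^j * s < L^m" using s(1) Lj Lm by simp
    moreover have "x$\<mu> = e * real (L^j * s)" using s(2) by simp
    ultimately show "\<exists>n. n < L^m \<and> L^j dvd n \<and> x$\<mu> = e * real n"
      by (intro exI[of _ "L^j * s"]) simp
  next
    assume "\<exists>n. n < L^m \<and> L^j dvd n \<and> x$\<mu> = e * real n"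
    then obtain n where n: "n < L^m" "L^j dvd n" "x$\<mu> = e * real n" by blast
    obtain s where s: "n = L^j * s" using n(2) by (auto elim: dvdE)
    have "s < L^(m-j)" using n(1) s Lm Lj by simp
    moreover have "x$\<mu> = real L ^ j * e * real s" using n(3) s by simp
    ultimately show "\<exists>s::nat. s < L^(m-j) \<and> x$\<mu> = real L ^ j * e * real s" by blast
  qed
  then show ?thesis by (simp add: OmegaJ_def Lat_def)
qed

lemma OmJ_cd: "j \<le> m \<Longrightarrow> y \<in> OmegaJ L k m j \<Longrightarrow> y \<in> Omega L k m \<and> L^j dvd cd L k y \<mu>"
proof -
  assume j: "j \<le> m" and y: "y \<in> OmegaJ L k m j"
  have "y \<in> Omega L k m" using y OmJ_iff[OF j] Om_iff by metis
  moreover obtain n where "n < L^m" "L^j dvd n" "y$\<mu> = e * real n" using y OmJ_iff[OF j] by metis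
  ultimately show ?thesis using cd_eq by metis
qed

lemma OmJ_sub: "j \<le> m \<Longrightarrow> OmegaJ L k m j \<subseteq> Omega L k m"
  using OmJ_cd by blast

lemma Yr_comp_cd: "cd L k (Yr L k j x) \<mu> = cd L k x \<mu> div L^j * L^j"
  by (rule cd_eq) (simp add: Yr_def)

lemma Yr_mem: "j \<le> m \<Longrightarrow> x \<in> Omega L k m \<Longrightarrow> Yr L k j x \<in> OmegaJ L k m j"
proof -
  assume j: "j \<le> m" and x: "x \<in> Omega L k m"
  show ?thesis unfolding OmJ_iff[OF j]
  proof
    fix \<mu>
    have "cd L k x \<mu> div L^j * L^j \<le> cd L k x \<mu>" by simp
    then have "cd L k x \<mu> div L^j * L^j < L^m" using Om_cd[OF x, of \<mu>] by linarith
    then show "\<exists>n<L ^ m. L ^ j dvd n \<and> Yr L k j x $ \<mu> = e * real n"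
      by (auto simp: Yr_def)
  qed
qed

lemma Yr_id: "j \<le> m \<Longrightarrow> y \<in> OmegaJ L k m j \<Longrightarrow> Yr L k j y = y"
proof -
  assume j: "j \<le> m" and y: "y \<in> OmegaJ L k m j"
  show ?thesis
  proof (simp add: vec_eq_iff, rule allI)
    fix \<mu>
    have d: "L^j dvd cd L k y \<mu>" and yy: "y \<in> Omega L k m" using OmJ_cd[OF j y] by auto
    have eq: "cd L k y \<mu> div L^j * L^j = cd L k y \<mu>" using d by simp
    have "Yr L k j y $ \<mu> = e * real (cd L k y \<mu> div L^j * L^j)" by (simp only: Yr_def vec_lambda_beta)
    also have "\<dots> = e * real (cd L k y \<mu>)" by (simp only: eq)
    finally show "Yr L k j y $ \<mu> = y $ \<mu>" using Om_cd[OF yy, of \<mu>] by simp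
  qed
qed

lemma Bj_iff:
  assumes j: "j \<le> m" and y: "y \<in> OmegaJ L k m j"
  shows "x \<in> Bj L k j y \<longleftrightarrow> x \<in> Omega L k m \<and> Yr L k j x = y"
proof -
  define p where "p = L^j"
  have p: "0 < p" using L1 p_def by simp
  have yy: "y \<in> Omega L k m" using OmJ_sub[OF j] y by blast
  have ycd: "\<And>\<mu>. y$\<mu> = e * real (cd L k y \<mu>) \<and> cd L k y \<mu> < L^m \<and> p dvd cd L k y \<mu>"
    using Om_cd[OF yy] OmJ_cd[OF j y] p_def by blast
  have pN: "p dvd L^m" using j p_def by (simp add: le_imp_power_dvd)
  show ?thesis
  proof
    assume x: "x \<in> Bj L k j y"
    have co: "\<exists>n. n < L^m \<and> x$\<mu> = e * real n \<and> n div p * p = cd L k y \<mu>" for \<mu>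
    proof -
      obtain z :: int where z: "x$\<mu> = e * of_int z" using x by (auto simp: Bj_def)
      have b: "y$\<mu> \<le> x$\<mu>" "x$\<mu> < y$\<mu> + real L^j * e" using x by (auto simp: Bj_def)
      define s where "s = cd L k y \<mu>"
      have "e * real s \<le> e * of_int z" using b(1) z ycd s_def by simp
      then have zs: "int s \<le> z" using e_pos by simp
      have "e * of_int z < e * (real s + real p)" using b(2) z ycd s_def p_def by (simp add: algebra_simps)
      then have "real_of_int z < real_of_int (int s + int p)" using e_pos by simp
      then have zs2: "z < int s + int p" using of_int_less_iff by blast
      define n where "n = nat z"
      have nz: "z = int n" using zs n_def by simp
      have "s \<le> n" "n < s + p" using zs zs2 nz by linarith+
      moreover have "s + p \<le> L^m" using nl2[OF p _ pN] ycd s_def by blast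
      ultimately have "n < L^m" "n div p * p = s" using nl1[OF p] ycd s_def by auto
      then show ?thesis using z nz s_def by auto
    qed
    have xO: "x \<in> Omega L k m" using co Om_iff by metis
    moreover have "Yr L k j x = y"
    proof (simp add: vec_eq_iff, rule allI)
      fix \<mu>
      obtain n where n: "n < L^m" "x$\<mu> = e * real n" "n div p * p = cd L k y \<mu>" using co by blast
      have cx: "cd L k x \<mu> = n" using cd_eq n(2) by blast
      have "Yr L k j x $ \<mu> = e * real (cd L k x \<mu> div L^j * L^j)" by (simp only: Yr_def vec_lambda_beta)
      also have "\<dots> = e * real (cd L k y \<mu>)" using cx n(3) p_def by simp
      finally show "Yr L k j x $ \<mu> = y $ \<mu>" using ycd by simp
    qed
    ultimately show "x \<in> Omega L k m \<and> Yr L k j x = y" by blast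
  next
    assume xy: "x \<in> Omega L k m \<and> Yr L k j x = y"
    have "\<forall>\<mu>. \<exists>n::int. x$\<mu> = e * of_int n"
      using Om_cd xy by (metis of_int_of_nat_eq)
    moreover have "y$\<mu> \<le> x$\<mu> \<and> x$\<mu> < y$\<mu> + real L^j * e" for \<mu>
    proof -
      define n where "n = cd L k x \<mu>"
      have xn: "x$\<mu> = e * real n" using Om_cd xy n_def by blast
      have yn: "y$\<mu> = e * real (n div p * p)" using xy n_def p_def by (auto simp: Yr_def)
      have "n div p * p \<le> n" by simp
      moreover have "n < n div p * p + p"
      proof -
        have "n = n div p * p + n mod p" by simp
        moreover have "n mod p < p" using p by simp
        ultimately show ?thesis by linarith
      qed
      ultimately have r: "real (n div p * p) \<le> real n" "real n < real (n div p * p) + real p"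
        by linarith+
      have h1: "e * real (n div p * p) \<le> e * real n" using mult_left_mono[OF r(1) less_imp_le[OF e_pos]] .
      have h2: "e * real n < e * (real (n div p * p) + real p)" using mult_strict_left_mono[OF r(2) e_pos] .
      show ?thesis using h1 h2 xn yn p_def by (simp add: algebra_simps)
    qed
    ultimately show "x \<in> Bj L k j y" by (simp add: Bj_def)
  qed
qed

lemma Bj_eq: "j \<le> m \<Longrightarrow> y \<in> OmegaJ L k m j \<Longrightarrow> Bj L k j y = {x \<in> Omega L k m. Yr L k j x = y}"
  using Bj_iff by blast

lemma the_Y: "j \<le> m \<Longrightarrow> x \<in> Omega L k m \<Longrightarrow> (THE y. y \<in> OmegaJ L k m j \<and> x \<in> Bj L k j y) = Yr L k j x"
  by (rule the_equality) (auto simp: Bj_iff Yr_mem)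

lemma Yr_comp: "x \<in> Omega L k m \<Longrightarrow> Yr L k (Suc j) (Yr L k j x) = Yr L k (Suc j) x"
proof (simp only: vec_eq_iff, rule allI)
  fix \<mu>
  have "cd L k x \<mu> div L ^ j * L ^ j div (L ^ j * L) = cd L k x \<mu> div (L ^ j * L)"
    using nl4[of "L^j" L "cd L k x \<mu>"] L1 by simp
  then have nat: "(cd L k x \<mu> div L ^ j * L ^ j) div L^(Suc j) * L^(Suc j) = cd L k x \<mu> div L^(Suc j) * L^(Suc j)"
    by (simp add: mult.commute)
  have "Yr L k (Suc j) (Yr L k j x) $ \<mu> = e * real (cd L k (Yr L k j x) \<mu> div L^Suc j * L^Suc j)"
    by (simp only: Yr_def[of L k "Suc j"] vec_lambda_beta)
  also have "\<dots> = e * real (cd L k x \<mu> div L^Suc j * L^Suc j)"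
    by (simp only: Yr_comp_cd nat)
  also have "\<dots> = Yr L k (Suc j) x $ \<mu>" by (simp only: Yr_def[of L k "Suc j"] vec_lambda_beta)
  finally show "Yr L k (Suc j) (Yr L k j x) $ \<mu> = Yr L k (Suc j) x $ \<mu>" .
qed

lemma finite_Om: "finite (Omega L k m :: (real^'d::finite) set)"
proof -
  have "Omega L k m \<subseteq> (\<lambda>n. \<chi> \<mu>. e * real (n \<mu>)) ` (PiE (UNIV::'d set) (\<lambda>_. {..<L^m}))"
  proof
    fix x :: "real^'d" assume x: "x \<in> Omega L k m"
    have "x = (\<chi> \<mu>. e * real (cd L k x \<mu>))" using Om_cd[OF x] by (simp add: vec_eq_iff)
    moreover have "cd L k x \<in> PiE UNIV (\<lambda>_. {..<L^m})" using Om_cd[OF x] by auto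
    ultimately show "x \<in> (\<lambda>n. \<chi> \<mu>. e * real (n \<mu>)) ` (PiE UNIV (\<lambda>_. {..<L^m}))" by blast
  qed
  moreover have "finite (PiE (UNIV::'d set) (\<lambda>_. {..<L^m}))" by (simp add: finite_PiE)
  ultimately show ?thesis using finite_subset by blast
qed

lemma finite_OmJ: "j \<le> m \<Longrightarrow> finite (OmegaJ L k m j :: (real^'d::finite) set)"
  using finite_Om OmJ_sub finite_subset by blast

end


lemma lap_pair:
  fixes S :: "(real^'d::finite) set" and f :: "real^'d \<Rightarrow> real"
  assumes fin: "finite S"
  shows "(\<Sum>x\<in>S. f x * (2 * f x - nb S f x v - nb S f x (- v))) = (\<Sum>z\<in>{z\<in>S. z + v \<in> S}. (f (z + v) - f z)^2)"
proof -
  have s1: "(\<Sum>x\<in>S. f x * (f x - nb S f x v)) = (\<Sum>z\<in>{z\<in>S. z + v \<in> S}. f z * (f z - f (z + v)))"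
    by (simp add: sum.inter_filter[OF fin] nb_def, rule sum.cong, auto)
  have s2: "(\<Sum>x\<in>S. f x * (f x - nb S f x (- v))) = (\<Sum>x\<in>{x\<in>S. x - v \<in> S}. f x * (f x - f (x - v)))"
    by (simp add: sum.inter_filter[OF fin] nb_def, rule sum.cong, auto)
  have img: "(\<lambda>z. z + v) ` {z\<in>S. z + v \<in> S} = {x\<in>S. x - v \<in> S}"
  proof
    show "(\<lambda>z. z + v) ` {z\<in>S. z + v \<in> S} \<subseteq> {x\<in>S. x - v \<in> S}" by auto
    show "{x\<in>S. x - v \<in> S} \<subseteq> (\<lambda>z. z + v) ` {z\<in>S. z + v \<in> S}"
    proof
      fix x assume "x \<in> {x\<in>S. x - v \<in> S}"
      then have "x - v \<in> {z\<in>S. z + v \<in> S}" "x = (x - v) + v" by auto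
      then show "x \<in> (\<lambda>z. z + v) ` {z\<in>S. z + v \<in> S}" by blast
    qed
  qed
  have s3: "(\<Sum>x\<in>{x\<in>S. x - v \<in> S}. f x * (f x - f (x - v))) = (\<Sum>z\<in>{z\<in>S. z + v \<in> S}. f (z + v) * (f (z + v) - f z))"
  proof -
    have "inj_on (\<lambda>z. z + v) {z\<in>S. z + v \<in> S}" by (simp add: inj_on_def)
    then have "(\<Sum>x\<in>(\<lambda>z. z + v) ` {z\<in>S. z + v \<in> S}. f x * (f x - f (x - v))) = (\<Sum>z\<in>{z\<in>S. z + v \<in> S}. f (z + v) * (f (z + v) - f (z + v - v)))"
      by (simp add: sum.reindex)
    then show ?thesis using img by simp
  qed
  have "(\<Sum>x\<in>S. f x * (2 * f x - nb S f x v - nb S f x (- v))) = (\<Sum>x\<in>S. f x * (f x - nb S f x v)) + (\<Sum>x\<in>S. f x * (f x - nb S f x (- v)))"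
    by (simp add: sum.distrib[symmetric] algebra_simps)
  also have "\<dots> = (\<Sum>z\<in>{z\<in>S. z + v \<in> S}. f z * (f z - f (z + v)) + f (z + v) * (f (z + v) - f z))"
    by (simp add: s1 s2 s3 sum.distrib)
  also have "\<dots> = (\<Sum>z\<in>{z\<in>S. z + v \<in> S}. (f (z + v) - f z)^2)"
    by (rule sum.cong) (simp_all add: power2_eq_square algebra_simps)
  finally show ?thesis .
qed

context latt begin

lemma card_sub:
  fixes z :: "real^'d::finite"
  assumes j: "Suc j \<le> m" and z: "z \<in> OmegaJ L k m (Suc j)"
  shows "card {y' \<in> OmegaJ L k m j. Yr L k (Suc j) y' = z} = L ^ CARD('d)"
proof -
  define p where "p = L^j"
  define q where "q = L^Suc j"
  have p: "0 < p" using L1 p_def by simp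
  have q: "0 < q" using L1 q_def by simp
  have qp: "q = p * L" using p_def q_def by simp
  have pq: "p dvd q" using qp by simp
  have qN: "q dvd L^m" unfolding q_def using j by (rule le_imp_power_dvd)
  have jm: "j \<le> m" using j by simp
  define s where "s = cd L k z"
  have zO: "z \<in> Omega L k m" using OmJ_sub[OF j] z by blast
  have hs: "\<And>\<mu>. z$\<mu> = e * real (s \<mu>) \<and> s \<mu> < L^m \<and> q dvd s \<mu>"
    using Om_cd[OF zO] OmJ_cd[OF j z] s_def q_def by blast
  define pt where "pt t = (\<chi> \<mu>. e * real (s \<mu> + p * t \<mu>))" for t :: "'d \<Rightarrow> nat"
  define T where "T = PiE (UNIV::'d set) (\<lambda>_. {..<L})"
  have inj: "inj_on pt T"
  proof (rule inj_onI)
    fix t1 t2 assume "t1 \<in> T" "t2 \<in> T" and eq: "pt t1 = pt t2"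
    show "t1 = t2"
    proof
      fix \<mu>
      have "pt t1 $ \<mu> = pt t2 $ \<mu>" using eq by simp
      then have "e * real (s \<mu> + p * t1 \<mu>) = e * real (s \<mu> + p * t2 \<mu>)" by (simp add: pt_def)
      then have "s \<mu> + p * t1 \<mu> = s \<mu> + p * t2 \<mu>" using e_pos by (simp only: mult_cancel_left of_nat_eq_iff) simp
      then show "t1 \<mu> = t2 \<mu>" using p by simp
    qed
  qed
  have cT: "card T = L ^ CARD('d)"
    by (simp add: T_def card_PiE)
  have seteq: "{y' \<in> OmegaJ L k m j. Yr L k (Suc j) y' = z} = pt ` T"
  proof
    show "pt ` T \<subseteq> {y' \<in> OmegaJ L k m j. Yr L k (Suc j) y' = z}"
    proof
      fix y assume "y \<in> pt ` T"
      then obtain t where t: "t \<in> T" "y = pt t" by blast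
      have tL: "\<And>\<mu>. t \<mu> < L" using t(1) by (auto simp: T_def)
      have ptl: "p * t \<mu> < q" for \<mu> using tL[of \<mu>] qp p by simp
      have nlt: "s \<mu> + p * t \<mu> < L^m" for \<mu>
        using nl2[OF q _ qN, of "s \<mu>"] hs ptl[of \<mu>] by fastforce
      have pdv: "p dvd s \<mu> + p * t \<mu>" for \<mu>
        using hs pq dvd_trans by (metis dvd_add dvd_triv_left)
      have "y \<in> OmegaJ L k m j"
        unfolding OmJ_iff[OF jm]
      proof
        fix \<mu>
        show "\<exists>n<L^m. L^j dvd n \<and> y$\<mu> = e * real n"
          using nlt[of \<mu>] pdv[of \<mu>] t(2) p_def by (intro exI[of _ "s \<mu> + p * t \<mu>"]) (simp add: pt_def)
      qed
      moreover have "Yr L k (Suc j) y = z"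
      proof (simp only: vec_eq_iff, rule allI)
        fix \<mu>
        have cdy: "cd L k y \<mu> = s \<mu> + p * t \<mu>" by (rule cd_eq) (simp add: t(2) pt_def)
        have nq: "(s \<mu> + p * t \<mu>) div q * q = s \<mu>"
          by (rule nl1[OF q]) (use hs ptl in auto)
        have "Yr L k (Suc j) y $ \<mu> = e * real (cd L k y \<mu> div L^Suc j * L^Suc j)"
          by (simp only: Yr_def vec_lambda_beta)
        also have "\<dots> = e * real (s \<mu>)" using cdy nq q_def by simp
        finally show "Yr L k (Suc j) y $ \<mu> = z $ \<mu>" using hs by simp
      qed
      ultimately show "y \<in> {y' \<in> OmegaJ L k m j. Yr L k (Suc j) y' = z}" by blast
    qed
    show "{y' \<in> OmegaJ L k m j. Yr L k (Suc j) y' = z} \<subseteq> pt ` T"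
    proof
      fix y assume y: "y \<in> {y' \<in> OmegaJ L k m j. Yr L k (Suc j) y' = z}"
      have yO: "y \<in> Omega L k m" and pd: "\<And>\<mu>. p dvd cd L k y \<mu>"
        using OmJ_cd[OF jm] y p_def by blast+
      define t where "t \<mu> = (cd L k y \<mu> - s \<mu>) div p" for \<mu>
      have key: "cd L k y \<mu> = s \<mu> + p * t \<mu> \<and> t \<mu> < L" for \<mu>
      proof -
        define n where "n = cd L k y \<mu>"
        have sn: "s \<mu> = n div q * q"
          using y Yr_comp_cd[of "Suc j" y \<mu>] s_def n_def q_def by simp
        have "n - s \<mu> = n mod q" using sn by (simp add: minus_div_mult_eq_mod)
        then have ltq: "n - s \<mu> < q" using q by simp
        have "p dvd s \<mu>" using sn qp by simp
        then have pd2: "p dvd n - s \<mu>" using pd n_def by (simp add: dvd_diff_nat)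
        have sle: "s \<mu> \<le> n" using sn by simp
        have "p * ((n - s \<mu>) div p) = n - s \<mu>" using pd2 by simp
        then have "n = s \<mu> + p * t \<mu>" using sle t_def n_def by simp
        moreover have "t \<mu> < L" using ltq qp p t_def n_def
          by (simp add: div_less_iff_less_mult mult.commute)
        ultimately show ?thesis using n_def by simp
      qed
      have "t \<in> T" using key by (auto simp: T_def)
      moreover have "y = pt t"
        using key Om_cd[OF yO] by (simp add: vec_eq_iff pt_def)
      ultimately show "y \<in> pt ` T" by blast
    qed
  qed
  show ?thesis using seteq card_image[OF inj] cT by simp
qed

lemma conn:
  assumes j: "j \<le> m"
    and nbh: "\<And>z \<mu>. z \<in> Omega L k m \<Longrightarrow> z + e *\<^sub>R axis \<mu> 1 \<in> Omega L k m \<Longrightarrow> f (z + e *\<^sub>R axis \<mu> 1) = f z"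
  shows "x \<in> Omega L k m \<Longrightarrow> f x = f (Yr L k j (x::real^'d::finite))"
proof -
  define p where "p = L^j"
  have p: "0 < p" using L1 p_def by simp
  define dd where "dd x = (\<Sum>\<mu>\<in>UNIV. cd L k x \<mu> - cd L k x \<mu> div p * p)" for x :: "real^'d"
  have "\<forall>x. x \<in> Omega L k m \<longrightarrow> dd x = N \<longrightarrow> f x = f (Yr L k j x)" for N
  proof (induction N rule: less_induct)
    case (less N)
    show ?case
    proof (intro allI impI)
      fix x assume x: "x \<in> Omega L k m" and dN: "dd x = N"
      show "f x = f (Yr L k j x)"
      proof (cases "\<forall>\<mu>. cd L k x \<mu> = cd L k x \<mu> div p * p")
        case True
        have "Yr L k j x = x"
        proof (simp only: vec_eq_iff, rule allI)
          fix \<mu>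
          have "Yr L k j x $ \<mu> = e * real (cd L k x \<mu> div L^j * L^j)" by (simp only: Yr_def vec_lambda_beta)
          also have "\<dots> = e * real (cd L k x \<mu>)" using True p_def by metis
          finally show "Yr L k j x $ \<mu> = x $ \<mu>" using Om_cd[OF x] by simp
        qed
        then show ?thesis by simp
      next
        case False
        then obtain \<mu> where mu: "cd L k x \<mu> \<noteq> cd L k x \<mu> div p * p" by blast
        define n where "n = cd L k x \<mu>"
        define r where "r = n div p * p"
        have rle: "r \<le> n" using r_def by simp
        have rne: "r \<noteq> n" using mu r_def n_def by simp
        have rn: "r < n" using rle rne by linarith
        then have n1: "1 \<le> n" by simp
        define z where "z = x - e *\<^sub>R axis \<mu> 1"
        have zc: "z $ \<nu> = (if \<nu> = \<mu> then e * real (n - 1) else x $ \<nu>)" for \<nu>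
          using Om_cd[OF x] n1 n_def by (auto simp: z_def axis_def of_nat_diff algebra_simps)
        have cdz: "cd L k z \<nu> = (if \<nu> = \<mu> then n - 1 else cd L k x \<nu>)" for \<nu>
          by (rule cd_eq) (simp add: zc Om_cd[OF x])
        have zO: "z \<in> Omega L k m"
          unfolding Om_iff
        proof
          fix \<nu>
          show "\<exists>n'<L ^ m. z $ \<nu> = e * real n'"
          proof (cases "\<nu> = \<mu>")
            case True
            have "n - 1 < L^m" using Om_cd[OF x] n_def by (simp add: less_imp_diff_less)
            then show ?thesis using zc True by auto
          next
            case False
            then show ?thesis using zc Om_cd[OF x] by auto
          qed
        qed
        have xz: "z + e *\<^sub>R axis \<mu> 1 = x" by (simp add: z_def)
        have fxz: "f x = f z" using nbh[OF zO] xz x by metis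
        have nrp: "n < r + p"
        proof -
          have "n = n div p * p + n mod p" by simp
          moreover have "n mod p < p" using p by simp
          ultimately show ?thesis using r_def by linarith
        qed
        have rdiv: "(n - 1) div p * p = r"
          by (rule nl1[OF p]) (use rn r_def nrp in \<open>auto simp: less_imp_le_nat\<close>)
        have Yz: "Yr L k j z = Yr L k j x"
        proof (simp only: vec_eq_iff, rule allI)
          fix \<nu>
          have "(n - 1) div p = n div p" using rdiv r_def p by simp
          then have hd: "(cd L k x \<mu> - 1) div L^j = cd L k x \<mu> div L^j" using n_def p_def by simp
          show "Yr L k j z $ \<nu> = Yr L k j x $ \<nu>"
            using hd n_def by (simp add: Yr_def cdz)
        qed
        have rd2: "(cd L k x \<mu> - 1) div p * p = cd L k x \<mu> div p * p" using rdiv r_def n_def by simp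
        have a1: "cd L k z \<mu> = n - 1" using cdz by simp
        have a2: "cd L k z \<mu> div p * p = r" using a1 rdiv by simp
        have a3: "cd L k x \<mu> div p * p = r" using r_def n_def by simp
        have a4: "cd L k x \<mu> = n" using n_def by simp
        have t1: "cd L k z \<mu> - cd L k z \<mu> div p * p < cd L k x \<mu> - cd L k x \<mu> div p * p"
        proof -
          have "0 < n - r" using rn by simp
          moreover have "n - 1 - r = n - r - 1" by simp
          ultimately have "n - 1 - r < n - r" by simp
          then show ?thesis using a1 a2 a3 a4 by metis
        qed
        have "dd z < dd x"
          unfolding dd_def
        proof (rule sum_strict_mono_ex1)
          show "\<forall>\<nu>\<in>UNIV. cd L k z \<nu> - cd L k z \<nu> div p * p \<le> cd L k x \<nu> - cd L k x \<nu> div p * p"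
          proof
            fix \<nu> :: 'd
            show "cd L k z \<nu> - cd L k z \<nu> div p * p \<le> cd L k x \<nu> - cd L k x \<nu> div p * p"
            proof (cases "\<nu> = \<mu>")
              case True then show ?thesis using t1 by simp
            next
              case False then show ?thesis by (simp add: cdz)
            qed
          qed
          show "\<exists>\<nu>\<in>UNIV. cd L k z \<nu> - cd L k z \<nu> div p * p < cd L k x \<nu> - cd L k x \<nu> div p * p"
            using t1 by blast
        qed simp
        then have "f z = f (Yr L k j z)" using less.IH dN zO by blast
        then show ?thesis using fxz Yz by simp
      qed
    qed
  qed
  then show "x \<in> Omega L k m \<Longrightarrow> f x = f (Yr L k j x)" by blast
qed

end


lemma nb_add: "nb S (f + g) x v = nb S f x v + nb S g x v" by (simp add: nb_def)
lemma nb_sc: "nb S (r *\<^sub>R f) x v = r * nb S f x v" by (simp add: nb_def)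

lemma QO_add: "QO L k m j (f + g) = QO L k m j f + QO L k m j g"
  by (rule ext) (simp add: QO_def sum.distrib algebra_simps)
lemma QO_sc: "QO L k m j (r *\<^sub>R f) = r *\<^sub>R QO L k m j f"
  by (rule ext) (simp add: QO_def sum_distrib_left sum_divide_distrib algebra_simps)
lemma QOadj_add: "QOadj L k m j (f + g) = QOadj L k m j f + QOadj L k m j g"
  by (rule ext) (simp add: QOadj_def)
lemma QOadj_sc: "QOadj L k m j (r *\<^sub>R f) = r *\<^sub>R QOadj L k m j f"
  by (rule ext) (simp add: QOadj_def)
lemma Qstep_add: "Qstep L k m j (f + g) = Qstep L k m j f + Qstep L k m j g"
  by (rule ext) (simp add: Qstep_def sum.distrib algebra_simps)
lemma Qstep_sc: "Qstep L k m j (r *\<^sub>R f) = r *\<^sub>R Qstep L k m j f"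
  by (rule ext) (simp add: Qstep_def sum_distrib_left sum_divide_distrib algebra_simps)
lemma Qstepadj_add: "Qstepadj L k m j (f + g) = Qstepadj L k m j f + Qstepadj L k m j g"
  by (rule ext) (simp add: Qstepadj_def)
lemma Qstepadj_sc: "Qstepadj L k m j (r *\<^sub>R f) = r *\<^sub>R Qstepadj L k m j f"
  by (rule ext) (simp add: Qstepadj_def)
lemma sum_split3: "(\<Sum>\<mu>\<in>S. (a \<mu> + b \<mu>) - 2 * (p + q) + (c \<mu> + d \<mu>)) =
  (\<Sum>\<mu>\<in>S. a \<mu> - 2 * p + c \<mu>) + (\<Sum>\<mu>\<in>S. b \<mu> - 2 * q + d \<mu>::real)"
  by (simp add: sum.distrib[symmetric] algebra_simps)
lemma sum_sc3: "(\<Sum>\<mu>\<in>S. r * a \<mu> - 2 * (r * p) + r * c \<mu>) = r * (\<Sum>\<mu>\<in>S. a \<mu> - 2 * p + c \<mu>::real)"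
  by (simp add: sum_distrib_left algebra_simps)
lemma Lap_add: "Lap L k m (f + g) = Lap L k m f + Lap L k m g"
proof
  fix x
  show "Lap L k m (f + g) x = (Lap L k m f + Lap L k m g) x"
    by (simp only: Lap_def plus_fun_apply nb_add sum_split3) (simp add: algebra_simps)
qed
lemma Lap_sc: "Lap L k m (r *\<^sub>R f) = r *\<^sub>R Lap L k m f"
proof
  fix x
  show "Lap L k m (r *\<^sub>R f) x = (r *\<^sub>R Lap L k m f) x"
    by (simp only: Lap_def scaleR_fun_apply nb_sc real_scaleR_def sum_sc3) (simp add: algebra_simps)
qed
lemma Aop_add: "Aop L k m a mu0 j (f + g) = Aop L k m a mu0 j f + Aop L k m a mu0 j g"
  by (rule ext) (simp add: Aop_def Lap_add QO_add QOadj_add algebra_simps)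
lemma Aop_sc: "Aop L k m a mu0 j (r *\<^sub>R f) = r *\<^sub>R Aop L k m a mu0 j f"
  by (rule ext) (simp add: Aop_def Lap_sc QO_sc QOadj_sc algebra_simps)

lemma sp_subspace: "subspace (sp S)"
  by (auto simp: subspace_def sp_def)

lemma QO_sp[simp]: "QO L k m j f \<in> sp (OmegaJ L k m j)" by (simp add: sp_def QO_def)
lemma QOadj_sp[simp]: "QOadj L k m j f \<in> sp (Omega L k m)" by (simp add: sp_def QOadj_def)
lemma Qstep_sp[simp]: "Qstep L k m j f \<in> sp (OmegaJ L k m (Suc j))" by (simp add: sp_def Qstep_def)
lemma Qstepadj_sp[simp]: "Qstepadj L k m j f \<in> sp (OmegaJ L k m j)" by (simp add: sp_def Qstepadj_def)
lemma Aop_sp[simp]: "Aop L k m a mu0 j f \<in> sp (Omega L k m)" by (simp add: sp_def Aop_def)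

context latt begin

lemma QOadj_eval: "j \<le> m \<Longrightarrow> x \<in> Omega L k m \<Longrightarrow> QOadj L k m j h x = h (Yr L k j x)"
  by (simp add: QOadj_def the_Y)

lemma QO_eval: "j \<le> m \<Longrightarrow> y \<in> OmegaJ L k m j \<Longrightarrow>
   QO L k m j f y = (1 / real L ^ (j * CARD('d))) * (\<Sum>x\<in>{x\<in>Omega L k m. Yr L k j x = y}. f x)"
  for y :: "real^'d::finite"
  by (simp add: QO_def Bj_eq)

lemma Qstepadj_eval: "Suc j \<le> m \<Longrightarrow> y \<in> OmegaJ L k m j \<Longrightarrow> Qstepadj L k m j h y = h (Yr L k (Suc j) y)"
proof -
  assume j: "Suc j \<le> m" and y: "y \<in> OmegaJ L k m j"
  have yO: "y \<in> Omega L k m" using OmJ_sub[of j] j y by auto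
  have "(THE ya. ya \<in> OmegaJ L k m (Suc j) \<and> y \<in> Bj L k (Suc j) ya) = Yr L k (Suc j) y"
    by (rule the_Y[OF j yO])
  then show ?thesis using y by (simp add: Qstepadj_def)
qed

lemma Qstep_set: "Suc j \<le> m \<Longrightarrow> z \<in> OmegaJ L k m (Suc j) \<Longrightarrow>
  OmegaJ L k m j \<inter> Bj L k (Suc j) z = {y \<in> OmegaJ L k m j. Yr L k (Suc j) y = z}"
  using Bj_eq[of "Suc j" z] OmJ_sub[of j] by auto

lemma Qstep_eval: "Suc j \<le> m \<Longrightarrow> z \<in> OmegaJ L k m (Suc j) \<Longrightarrow>
   Qstep L k m j h z = (1 / real L ^ CARD('d)) * (\<Sum>y\<in>{y\<in>OmegaJ L k m j. Yr L k (Suc j) y = z}. h y)"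
  for z :: "real^'d::finite"
proof -
  assume j: "Suc j \<le> m" and z: "z \<in> OmegaJ L k m (Suc j)"
  show ?thesis using z by (simp add: Qstep_def Qstep_set[OF j z])
qed

lemma Qstep_Qstepadj:
  assumes j: "Suc j \<le> m" and h: "h \<in> sp (OmegaJ L k m (Suc j) :: (real^'d::finite) set)"
  shows "Qstep L k m j (Qstepadj L k m j h) = h"
proof
  fix z :: "real^'d"
  show "Qstep L k m j (Qstepadj L k m j h) z = h z"
  proof (cases "z \<in> OmegaJ L k m (Suc j)")
    case False
    then show ?thesis using h by (simp add: Qstep_def sp_def)
  next
    case True
    have "(\<Sum>y\<in>{y\<in>OmegaJ L k m j. Yr L k (Suc j) y = z}. Qstepadj L k m j h y)
        = (\<Sum>y\<in>{y\<in>OmegaJ L k m j. Yr L k (Suc j) y = z}. h z)"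
      by (rule sum.cong) (use j in \<open>auto simp: Qstepadj_eval\<close>)
    also have "\<dots> = real (L ^ CARD('d)) * h z" using card_sub[OF j True] by simp
    finally show ?thesis using True j L1 by (simp add: Qstep_eval)
  qed
qed

lemma QO_comp: assumes j: "Suc j \<le> m"
  shows "QO L k m (Suc j) f = Qstep L k m j (QO L k m j (f :: real^'d::finite \<Rightarrow> real))"
proof
  fix z :: "real^'d"
  show "QO L k m (Suc j) f z = Qstep L k m j (QO L k m j f) z"
  proof (cases "z \<in> OmegaJ L k m (Suc j)")
    case False
    then show ?thesis by (simp add: Qstep_def QO_def)
  next
    case True
    have jm: "j \<le> m" using j by simp
    define S where "S = {x \<in> Omega L k m. Yr L k (Suc j) x = z}"
    define T where "T = {y \<in> OmegaJ L k m j. Yr L k (Suc j) y = z}"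
    have fS: "finite S" unfolding S_def by (rule finite_subset[OF _ finite_Om]) auto
    have fT: "finite T" unfolding T_def by (rule finite_subset[OF _ finite_OmJ[OF jm]]) auto
    have ST: "Yr L k j ` S \<subseteq> T"
      using Yr_mem[OF jm] Yr_comp S_def T_def by auto
    have grp: "(\<Sum>y\<in>T. \<Sum>x\<in>{x. x \<in> S \<and> Yr L k j x = y}. f x) = (\<Sum>x\<in>S. f x)"
      by (rule sum.group[OF fS fT ST])
    have inner: "y \<in> T \<Longrightarrow> {x. x \<in> S \<and> Yr L k j x = y} = {x \<in> Omega L k m. Yr L k j x = y}" for y
    proof (rule set_eqI)
      fix x assume yT: "y \<in> T"
      have "x \<in> Omega L k m \<Longrightarrow> Yr L k j x = y \<Longrightarrow> Yr L k (Suc j) x = z"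
      proof -
        assume xO: "x \<in> Omega L k m" and xy: "Yr L k j x = y"
        have "Yr L k (Suc j) x = Yr L k (Suc j) (Yr L k j x)" using Yr_comp[OF xO] by simp
        also have "\<dots> = z" using xy yT T_def by simp
        finally show ?thesis .
      qed
      then show "x \<in> {x. x \<in> S \<and> Yr L k j x = y} \<longleftrightarrow> x \<in> {x \<in> Omega L k m. Yr L k j x = y}"
        using S_def by blast
    qed
    have "Qstep L k m j (QO L k m j f) z
       = (1 / real L ^ CARD('d)) * (\<Sum>y\<in>T. (1 / real L ^ (j * CARD('d))) * (\<Sum>x\<in>{x\<in>Omega L k m. Yr L k j x = y}. f x))"
      unfolding Qstep_eval[OF j True] T_def
      by (rule arg_cong[where f="\<lambda>t. _ * t"], rule sum.cong) (auto simp: QO_eval[OF jm])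
    also have "\<dots> = (1 / real L ^ CARD('d)) * (1 / real L ^ (j * CARD('d))) * (\<Sum>y\<in>T. \<Sum>x\<in>{x. x \<in> S \<and> Yr L k j x = y}. f x)"
      by (simp add: sum_distrib_left inner)
    also have "\<dots> = (1 / real L ^ (Suc j * CARD('d))) * (\<Sum>x\<in>S. f x)"
      by (simp add: grp power_add)
    also have "\<dots> = QO L k m (Suc j) f z"
      using True j by (simp add: QO_eval S_def)
    finally show ?thesis ..
  qed
qed

lemma QOadj_comp: assumes j: "Suc j \<le> m"
  shows "QOadj L k m (Suc j) h = QOadj L k m j (Qstepadj L k m j (h :: real^'d::finite \<Rightarrow> real))"
proof
  fix x :: "real^'d"
  have jm: "j \<le> m" using j by simp
  show "QOadj L k m (Suc j) h x = QOadj L k m j (Qstepadj L k m j h) x"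
  proof (cases "x \<in> Omega L k m")
    case False then show ?thesis by (simp add: QOadj_def)
  next
    case True
    then show ?thesis using j jm Yr_mem[OF jm True]
      by (simp add: QOadj_eval Qstepadj_eval Yr_comp)
  qed
qed

end


lemma real_rel:
  fixes r u a s :: real
  assumes r: "r > 1" and u: "0 < u" "u < 1" and a: "a > 0" and s: "s > 0"
  shows "(a*(1-1/r)/(1-u/r)) / (r * s) = ((a*(1-1/r)/(1-u))/s) * (a/(r * s)) / ((a*(1-1/r)/(1-u))/s + a/(r * s))"
proof -
  have r0: "r > 0" using r by simp
  define t where "t = 1 - 1/r"
  have t: "t > 0" using r by (simp add: t_def field_simps)
  have h1: "1 - u/r > 0" using u r by (simp add: field_simps)
  have h2: "1 - u > 0" using u by simp
  define X where "X = (a*t/(1-u))/s"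
  define Y where "Y = a/(r * s)"
  define Z where "Z = (a*t/(1-u/r)) / (r * s)"
  have X: "X > 0" using a t h2 s by (simp add: X_def)
  have Y: "Y > 0" using a r0 s by (simp add: Y_def)
  have Z: "Z > 0" using a t h1 r0 s by (simp add: Z_def)
  have iX: "1/X = s*(1-u)/(a*t)" by (simp add: X_def)
  have iY: "1/Y = r* s/a" by (simp add: Y_def)
  have iZ: "1/Z = s*(r*(1-u/r))/(a*t)" by (simp add: Z_def)
  have e1: "r*(1-u/r) = r - u" using r0 by (simp add: field_simps)
  have e2: "(1-u) + r*t = r - u" using r0 by (simp add: t_def field_simps)
  have "1/X + 1/Y = s*((1-u) + r*t)/(a*t)" unfolding iX iY using a t by (simp add: field_simps)
  also have "\<dots> = 1/Z" unfolding iZ e1 e2 ..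
  finally have eq: "1/Z = 1/X + 1/Y" ..
  have "X*Y/(X+Y) = 1/(1/X + 1/Y)" using X Y by (simp add: field_simps)
  also have "\<dots> = 1/(1/Z)" by (simp only: eq)
  also have "\<dots> = Z" by simp
  finally show ?thesis unfolding X_def Y_def Z_def t_def by simp
qed

lemma fun_sum_apply: "(\<Sum>x\<in>S. F x) (z::'a) = (\<Sum>x\<in>S. F x z :: real)"
  by (induct S rule: infinite_finite_induct) auto


context latt begin

lemma Lap_pt:
  fixes f :: "real^'d::finite \<Rightarrow> real"
  assumes x: "x \<in> Omega L k m"
  shows "f x * (- Lap L k m f x) = (1/e^2) * (\<Sum>\<mu>\<in>UNIV. f x * (2 * f x - nb (Omega L k m) f x (e *\<^sub>R axis \<mu> 1) - nb (Omega L k m) f x (- (e *\<^sub>R axis \<mu> 1))))"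
proof -
  define A where "A \<mu> = nb (Omega L k m) f x (e *\<^sub>R axis \<mu> 1)" for \<mu>
  define C where "C \<mu> = nb (Omega L k m) f x (- (e *\<^sub>R axis \<mu> 1))" for \<mu>
  have l: "Lap L k m f x = (1/e^2) * (\<Sum>\<mu>\<in>UNIV. A \<mu> - 2 * f x + C \<mu>)"
    using x by (simp add: Lap_def A_def C_def)
  have s1: "(\<Sum>\<mu>\<in>UNIV. f x * (2 * f x - A \<mu> - C \<mu>)) = f x * (\<Sum>\<mu>\<in>UNIV. 2 * f x - A \<mu> - C \<mu>)"
    by (simp add: sum_distrib_left)
  have s2: "(\<Sum>\<mu>\<in>UNIV. 2 * f x - A \<mu> - C \<mu>) = (\<Sum>\<mu>\<in>UNIV. - (A \<mu> - 2 * f x + C \<mu>))"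
    by (rule sum.cong) auto
  have s3: "(\<Sum>\<mu>\<in>UNIV. - (A \<mu> - 2 * f x + C \<mu>)) = - (\<Sum>\<mu>\<in>UNIV. A \<mu> - 2 * f x + C \<mu>)"
    by (rule sum_negf)
  show ?thesis unfolding A_def[symmetric] C_def[symmetric] l s1 s2 s3 by simp
qed

lemma Lap_quad:
  fixes f :: "real^'d::finite \<Rightarrow> real"
  shows "(\<Sum>x\<in>Omega L k m. f x * (- Lap L k m f x)) =
    (1/e^2) * (\<Sum>\<mu>\<in>UNIV. \<Sum>z\<in>{z\<in>Omega L k m. z + e *\<^sub>R axis \<mu> 1 \<in> Omega L k m}. (f (z + e *\<^sub>R axis \<mu> 1) - f z)^2)"
proof -
  have "(\<Sum>x\<in>Omega L k m. f x * (- Lap L k m f x)) =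
     (\<Sum>x\<in>Omega L k m. (1/e^2) * (\<Sum>\<mu>\<in>UNIV. f x * (2 * f x - nb (Omega L k m) f x (e *\<^sub>R axis \<mu> 1) - nb (Omega L k m) f x (- (e *\<^sub>R axis \<mu> 1)))))"
    by (rule sum.cong[OF refl]) (rule Lap_pt)
  also have "\<dots> = (1/e^2) * (\<Sum>x\<in>Omega L k m. \<Sum>\<mu>\<in>UNIV. f x * (2 * f x - nb (Omega L k m) f x (e *\<^sub>R axis \<mu> 1) - nb (Omega L k m) f x (- (e *\<^sub>R axis \<mu> 1))))"
    by (rule sum_distrib_left[symmetric])
  also have "\<dots> = (1/e^2) * (\<Sum>\<mu>\<in>UNIV. \<Sum>x\<in>Omega L k m. f x * (2 * f x - nb (Omega L k m) f x (e *\<^sub>R axis \<mu> 1) - nb (Omega L k m) f x (- (e *\<^sub>R axis \<mu> 1))))"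
    by (subst sum.swap) (rule refl)
  also have "\<dots> = (1/e^2) * (\<Sum>\<mu>\<in>UNIV. \<Sum>z\<in>{z\<in>Omega L k m. z + e *\<^sub>R axis \<mu> 1 \<in> Omega L k m}. (f (z + e *\<^sub>R axis \<mu> 1) - f z)^2)"
    by (simp add: lap_pair[OF finite_Om])
  finally show ?thesis .
qed

lemma aj_pos: "1 \<le> j \<Longrightarrow> 0 < a \<Longrightarrow> 0 < aj a L j"
proof -
  assume j: "1 \<le> j" and a: "0 < a"
  have L2: "real L ^ 2 > 1" using L1 by simp
  have L2j: "real L ^ (2*j) > 1" using L1 j by simp
  have "1 / real L ^ 2 < 1" using L2 by (simp add: divide_less_eq)
  moreover have "1 / real L ^ (2*j) < 1" using L2j by (simp add: divide_less_eq)
  ultimately show ?thesis using a by (simp add: aj_def)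
qed

lemma Aop_ker:
  fixes f :: "real^'d::finite \<Rightarrow> real"
  assumes j1: "1 \<le> j" and jm: "j \<le> m" and a: "0 < a" and mu: "0 \<le> mu0"
    and f: "f \<in> sp (Omega L k m)" and A0: "Aop L k m a mu0 j f = 0"
  shows "f = 0"
proof -
  define B where "B = aj a L j / (real L ^ j * e)^2"
  define mb where "mb = mubar mu0 L k"
  have B: "B > 0" using aj_pos[OF j1 a] e_pos L1 by (simp add: B_def)
  have mb: "mb \<ge> 0" using mu by (simp add: mb_def mubar_def)
  define Om where "Om = (Omega L k m :: (real^'d) set)"
  define OJ where "OJ = (OmegaJ L k m j :: (real^'d) set)"
  have fOm: "finite Om" using finite_Om Om_def by simp
  have fOJ: "finite OJ" using finite_OmJ[OF jm] OJ_def by simp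
  have Ax: "x \<in> Om \<Longrightarrow> Aop L k m a mu0 j f x = - Lap L k m f x + mb * f x + B * QO L k m j f (Yr L k j x)" for x
    using jm by (simp add: Aop_def Om_def B_def mb_def QOadj_eval)
  define T1 where "T1 = (\<Sum>x\<in>Om. f x * (- Lap L k m f x))"
  define T2 where "T2 = (\<Sum>x\<in>Om. f x * f x)"
  define T3 where "T3 = (\<Sum>x\<in>Om. f x * QO L k m j f (Yr L k j x))"
  have "0 = (\<Sum>x\<in>Om. f x * Aop L k m a mu0 j f x)" using A0 by simp
  also have "\<dots> = (\<Sum>x\<in>Om. f x * (- Lap L k m f x) + mb * (f x * f x) + B * (f x * QO L k m j f (Yr L k j x)))"
    by (rule sum.cong) (simp_all add: Ax algebra_simps)
  also have "\<dots> = T1 + mb * T2 + B * T3"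
    by (simp add: T1_def T2_def T3_def sum.distrib sum_distrib_left sum_subtractf sum_negf)
  finally have tot: "T1 + mb * T2 + B * T3 = 0" by simp
  have fib: "\<And>y. y \<in> OJ \<Longrightarrow> (\<Sum>x\<in>{x\<in>Om. Yr L k j x = y}. f x) = real L ^ (j * CARD('d)) * QO L k m j f y"
    using jm L1 by (simp add: QO_eval OJ_def Om_def)
  have "T3 = (\<Sum>y\<in>OJ. \<Sum>x\<in>{x. x \<in> Om \<and> Yr L k j x = y}. f x * QO L k m j f (Yr L k j x))"
    unfolding T3_def by (rule sum.group[symmetric, OF fOm fOJ]) (use Yr_mem[OF jm] Om_def OJ_def in auto)
  also have "\<dots> = (\<Sum>y\<in>OJ. QO L k m j f y * (\<Sum>x\<in>{x\<in>Om. Yr L k j x = y}. f x))"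
    by (rule sum.cong) (auto simp: sum_distrib_left mult.commute intro!: sum.cong)
  also have "\<dots> = (\<Sum>y\<in>OJ. real L ^ (j * CARD('d)) * (QO L k m j f y)^2)"
    by (rule sum.cong) (simp_all add: fib power2_eq_square)
  finally have T3: "T3 = real L ^ (j * CARD('d)) * (\<Sum>y\<in>OJ. (QO L k m j f y)^2)"
    by (simp add: sum_distrib_left)
  have T1nn: "T1 \<ge> 0" unfolding T1_def Om_def Lap_quad
    by (intro mult_nonneg_nonneg sum_nonneg) auto
  have T2nn: "T2 \<ge> 0" unfolding T2_def by (intro sum_nonneg) auto
  have T3nn': "(\<Sum>y\<in>OJ. (QO L k m j f y)^2) \<ge> 0" by (intro sum_nonneg) auto
  have Lp: "real L ^ (j * CARD('d)) > 0" using L1 by simp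
  have T3nn: "T3 \<ge> 0" using T3 T3nn' Lp by simp
  have "T1 = 0" using tot T1nn T2nn T3nn mb B
    by (smt (verit) mult_nonneg_nonneg)
  moreover have "B * T3 = 0" using tot T1nn T2nn T3nn mb B
    by (smt (verit) mult_nonneg_nonneg)
  ultimately have T1z: "T1 = 0" and T3z: "T3 = 0" using B by auto
  have e2: "1/e^2 > 0" using e_pos by simp
  have sq0: "\<And>\<mu> z. z \<in> Om \<Longrightarrow> z + e *\<^sub>R axis \<mu> 1 \<in> Om \<Longrightarrow> (f (z + e *\<^sub>R axis \<mu> 1) - f z)^2 = 0"
  proof -
    fix \<mu> z assume z1: "z \<in> Om" and z2: "z + e *\<^sub>R axis \<mu> 1 \<in> Om"
    have fin: "\<And>\<mu>. finite {z\<in>Omega L k m. z + e *\<^sub>R axis \<mu> 1 \<in> Omega L k m}"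
      by (rule finite_subset[OF _ finite_Om]) auto
    have "(\<Sum>\<mu>\<in>UNIV. \<Sum>z\<in>{z\<in>Omega L k m. z + e *\<^sub>R axis \<mu> 1 \<in> Omega L k m}. (f (z + e *\<^sub>R axis \<mu> 1) - f z)^2) = 0"
      using T1z e2 unfolding T1_def Om_def Lap_quad by simp
    then have "\<forall>\<mu>\<in>UNIV. (\<Sum>z\<in>{z\<in>Omega L k m. z + e *\<^sub>R axis \<mu> 1 \<in> Omega L k m}. (f (z + e *\<^sub>R axis \<mu> 1) - f z)^2) = 0"
      by (subst (asm) sum_nonneg_eq_0_iff) (auto intro: sum_nonneg)
    then have "(\<Sum>z\<in>{z\<in>Omega L k m. z + e *\<^sub>R axis \<mu> 1 \<in> Omega L k m}. (f (z + e *\<^sub>R axis \<mu> 1) - f z)^2) = 0"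
      by blast
    then have "\<forall>z\<in>{z\<in>Omega L k m. z + e *\<^sub>R axis \<mu> 1 \<in> Omega L k m}. (f (z + e *\<^sub>R axis \<mu> 1) - f z)^2 = 0"
      by (subst (asm) sum_nonneg_eq_0_iff[OF fin]) auto
    then show "(f (z + e *\<^sub>R axis \<mu> 1) - f z)^2 = 0" using z1 z2 Om_def by blast
  qed
  have nbh: "\<And>z \<mu>. z \<in> Omega L k m \<Longrightarrow> z + e *\<^sub>R axis \<mu> 1 \<in> Omega L k m \<Longrightarrow> f (z + e *\<^sub>R axis \<mu> 1) = f z"
    using sq0 Om_def by simp
  have cn: "\<And>x. x \<in> Om \<Longrightarrow> f x = f (Yr L k j x)"
    using conn[OF jm nbh] Om_def by blast
  have QO0: "\<And>y. y \<in> OJ \<Longrightarrow> QO L k m j f y = 0"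
  proof -
    have "real L ^ (j * CARD('d)) * (\<Sum>y\<in>OJ. (QO L k m j f y)^2) = 0" using T3z T3 by simp
    then have "(\<Sum>y\<in>OJ. (QO L k m j f y)^2) = 0" using Lp L1 by simp
    then have "\<forall>y\<in>OJ. (QO L k m j f y)^2 = 0"
      by (subst (asm) sum_nonneg_eq_0_iff[OF fOJ]) auto
    then show "\<And>y. y \<in> OJ \<Longrightarrow> QO L k m j f y = 0" by simp
  qed
  have fy: "\<And>y. y \<in> OJ \<Longrightarrow> f y = 0"
  proof -
    fix y assume y: "y \<in> OJ"
    define F where "F = {x\<in>Om. Yr L k j x = y}"
    have fF: "finite F" unfolding F_def using fOm by simp
    have yF: "y \<in> F" using y Yr_id[OF jm] OmJ_sub[OF jm] F_def OJ_def Om_def by auto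
    have cF: "card F > 0" using fF yF card_gt_0_iff by blast
    have "(\<Sum>x\<in>F. f x) = (\<Sum>x\<in>F. f y)" by (rule sum.cong) (auto simp: F_def cn)
    also have "\<dots> = real (card F) * f y" by simp
    finally have "real (card F) * f y = real L ^ (j * CARD('d)) * QO L k m j f y"
      using fib[OF y] F_def by simp
    then have "real (card F) * f y = 0" using QO0[OF y] by simp
    then show "f y = 0" using cF by simp
  qed
  show "f = 0"
  proof
    fix x
    show "f x = 0 x"
    proof (cases "x \<in> Om")
      case True
      have "Yr L k j x \<in> OJ" using Yr_mem[OF jm] True Om_def OJ_def by simp
      then have "f (Yr L k j x) = 0" by (rule fy)
      then show ?thesis using cn[OF True] by simp
    next
      case False
      then show ?thesis using f Om_def by (simp add: sp_def)
    qed
  qed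
qed

end


context latt begin

lemma sp_span:
  fixes S :: "(real^'d::finite) set"
  assumes fin: "finite S"
  shows "sp S = span ((\<lambda>x z. if z = x then 1 else 0 :: real) ` S)"
proof
  show "span ((\<lambda>x z. if z = x then 1 else 0 :: real) ` S) \<subseteq> sp S"
    by (rule span_minimal[OF _ sp_subspace]) (auto simp: sp_def)
  show "sp S \<subseteq> span ((\<lambda>x z. if z = x then 1 else 0 :: real) ` S)"
  proof
    fix f assume f: "f \<in> sp S"
    have eq: "f = (\<Sum>x\<in>S. f x *\<^sub>R (\<lambda>z. if z = x then 1 else 0 :: real))"
    proof
      fix z
      have "(\<Sum>x\<in>S. f x *\<^sub>R (\<lambda>z. if z = x then 1 else 0 :: real)) z = (\<Sum>x\<in>S. if z = x then f x else 0)"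
        by (simp add: fun_sum_apply if_distrib cong: if_cong)
      also have "\<dots> = (if z \<in> S then f z else 0)" using fin by (simp add: sum.delta)
      also have "\<dots> = f z" using f by (auto simp: sp_def)
      finally show "f z = (\<Sum>x\<in>S. f x *\<^sub>R (\<lambda>z. if z = x then 1 else 0 :: real)) z" by simp
    qed
    have "(\<Sum>x\<in>S. f x *\<^sub>R (\<lambda>z. if z = x then 1 else 0 :: real)) \<in> span ((\<lambda>x z. if z = x then 1 else 0 :: real) ` S)"
      by (intro span_sum span_scale span_base) auto
    then show "f \<in> span ((\<lambda>x z. if z = x then 1 else 0 :: real) ` S)" using eq by simp
  qed
qed

lemma Aop_bij:
  assumes j1: "1 \<le> j" and jm: "j \<le> m" and a: "0 < a" and mu: "0 \<le> mu0"
  shows "bij_betw (Aop L k m a mu0 j) (sp (Omega L k m :: (real^'d::finite) set)) (sp (Omega L k m))"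
proof -
  define X where "X = (\<lambda>x z. if z = x then 1 else 0 :: real) ` (Omega L k m :: (real^'d) set)"
  have fX: "finite X" unfolding X_def by (rule finite_imageI[OF finite_Om])
  have spX: "sp (Omega L k m) = span X" using sp_span[OF finite_Om] X_def by simp
  have lin: "linear (Aop L k m a mu0 j :: (real^'d \<Rightarrow> real) \<Rightarrow> _)"
    by (rule linearI) (simp_all add: Aop_add Aop_sc)
  have into: "Aop L k m a mu0 j ` span X \<subseteq> span X" unfolding spX[symmetric] by (auto intro: Aop_sp)
  have inj: "inj_on (Aop L k m a mu0 j) (span X)"
  proof (rule inj_onI)
    fix f g assume f: "f \<in> span X" and g: "g \<in> span X" and eq: "Aop L k m a mu0 j f = Aop L k m a mu0 j g"
    have "Aop L k m a mu0 j (f - g) = 0" using eq linear_diff[OF lin] by simp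
    moreover have "f - g \<in> sp (Omega L k m)"
    proof -
      have "f \<in> sp (Omega L k m)" "g \<in> sp (Omega L k m)" using f g spX by auto
      then show ?thesis by (rule subspace_diff[OF sp_subspace])
    qed
    ultimately have "f - g = 0" using Aop_ker[OF j1 jm a mu] by blast
    then show "f = g" by simp
  qed
  have "Aop L k m a mu0 j ` span X = span X" by (rule inj_surj_span[OF fX lin into inj])
  then show ?thesis using inj spX by (simp add: bij_betw_def)
qed

end


context latt begin

lemma scal_rel:
  assumes j1: "1 \<le> j" and a: "0 < a"
  shows "aj a L (Suc j) / (real L ^ Suc j * e)^2 =
    (aj a L j / (real L ^ j * e)^2) * (a / (real L ^ (j+1) * e)^2) /
    ((aj a L j / (real L ^ j * e)^2) + (a / (real L ^ (j+1) * e)^2))"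
proof -
  define r where "r = real L ^ 2"
  define u where "u = 1 / real L ^ (2*j)"
  define s where "s = (real L ^ j * e)^2"
  have r: "r > 1" using L1 r_def by simp
  have Lj: "real L ^ (2*j) > 1" using L1 j1 by simp
  have u: "0 < u" "u < 1" using Lj u_def L1 by (auto simp: divide_less_eq)
  have s: "s > 0" using L1 e_pos s_def by simp
  have e1: "aj a L (Suc j) = a*(1-1/r)/(1-u/r)"
    by (simp add: aj_def r_def u_def power_add power_mult_distrib mult.commute power2_eq_square)
  have e2: "aj a L j = a*(1-1/r)/(1-u)" by (simp add: aj_def r_def u_def)
  have e3: "(real L ^ Suc j * e)^2 = r * s" by (simp add: r_def s_def power_mult_distrib)
  have e4: "(real L ^ (j+1) * e)^2 = r * s" by (simp add: r_def s_def power_mult_distrib)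
  show ?thesis unfolding e1 e2 e3 e4 s_def[symmetric] using real_rel[OF r u a s] .
qed

lemma step:
  assumes j1: "1 \<le> j" and jm: "Suc j \<le> m" and a: "0 < a" and mu: "0 \<le> mu0"
  shows "invertible_on (OmegaJ L k m j :: (real^'d::finite) set) (Cpre L k m a mu0 j)
          \<and> (\<forall>f\<in>sp (Omega L k m :: (real^'d) set).
               Geta L k m a mu0 (j + 1) f = (\<lambda>x. Term L k m a mu0 j f x + Geta L k m a mu0 j f x))"
proof -
  have jm': "j \<le> m" using jm by simp
  define B where "B = aj a L j / (real L ^ j * e)^2"
  define c where "c = a / (real L ^ (j+1) * e)^2"
  define B' where "B' = aj a L (Suc j) / (real L ^ Suc j * e)^2"
  have Bp: "B > 0" using aj_pos[OF j1 a] e_pos L1 by (simp add: B_def)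
  have cp: "c > 0" using a e_pos L1 by (simp add: c_def)
  have BB': "B' = B * c / (B + c)" using scal_rel[OF j1 a] by (simp add: B_def c_def B'_def)
  let ?V = "sp (Omega L k m :: (real^'d) set)"
  let ?W = "sp (OmegaJ L k m j :: (real^'d) set)"
  let ?A = "Aop L k m a mu0 j :: (real^'d \<Rightarrow> real) \<Rightarrow> _"
  let ?A' = "Aop L k m a mu0 (Suc j) :: (real^'d \<Rightarrow> real) \<Rightarrow> _"
  let ?Q = "QO L k m j :: (real^'d \<Rightarrow> real) \<Rightarrow> _"
  let ?Qa = "QOadj L k m j :: (real^'d \<Rightarrow> real) \<Rightarrow> _"
  let ?P = "\<lambda>w. Qstepadj L k m j (Qstep L k m j w) :: real^'d \<Rightarrow> real"
  let ?S = "Cpre L k m a mu0 j :: (real^'d \<Rightarrow> real) \<Rightarrow> _"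
  have f1: "subspace ?V" by (rule sp_subspace)
  have f2: "subspace ?W" by (rule sp_subspace)
  have f3: "\<And>x y. x\<in>?V \<Longrightarrow> y\<in>?V \<Longrightarrow> ?A (x+y) = ?A x + ?A y" by (simp add: Aop_add)
  have f4: "\<And>r x. x\<in>?V \<Longrightarrow> ?A (r *\<^sub>R x) = r *\<^sub>R ?A x" by (simp add: Aop_sc)
  have f5: "\<And>x y. x\<in>?V \<Longrightarrow> y\<in>?V \<Longrightarrow> ?A' (x+y) = ?A' x + ?A' y" by (simp add: Aop_add)
  have f6: "\<And>r x. x\<in>?V \<Longrightarrow> ?A' (r *\<^sub>R x) = r *\<^sub>R ?A' x" by (simp add: Aop_sc)
  have f7: "\<And>x y. x\<in>?V \<Longrightarrow> y\<in>?V \<Longrightarrow> ?Q (x+y) = ?Q x + ?Q y" by (simp add: QO_add)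
  have f8: "\<And>r x. x\<in>?V \<Longrightarrow> ?Q (r *\<^sub>R x) = r *\<^sub>R ?Q x" by (simp add: QO_sc)
  have f9: "\<And>x y. x\<in>?W \<Longrightarrow> y\<in>?W \<Longrightarrow> ?Qa (x+y) = ?Qa x + ?Qa y" by (simp add: QOadj_add)
  have f10: "\<And>r x. x\<in>?W \<Longrightarrow> ?Qa (r *\<^sub>R x) = r *\<^sub>R ?Qa x" by (simp add: QOadj_sc)
  have f11: "\<And>x y. x\<in>?W \<Longrightarrow> y\<in>?W \<Longrightarrow> ?P (x+y) = ?P x + ?P y" by (simp add: Qstep_add Qstepadj_add)
  have f12: "\<And>r x. x\<in>?W \<Longrightarrow> ?P (r *\<^sub>R x) = r *\<^sub>R ?P x" by (simp add: Qstep_sc Qstepadj_sc)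
  have f13: "bij_betw ?A ?V ?V" by (rule Aop_bij[OF j1 jm' a mu])
  have f14: "bij_betw ?A' ?V ?V" by (rule Aop_bij) (use j1 jm a mu in auto)
  have f15: "\<And>x. x\<in>?V \<Longrightarrow> ?Q x \<in> ?W" by simp
  have f16: "\<And>x. x\<in>?W \<Longrightarrow> ?Qa x \<in> ?V" by simp
  have f17: "\<And>x. x\<in>?W \<Longrightarrow> ?P x \<in> ?W" by simp
  have f18: "\<And>x. x\<in>?W \<Longrightarrow> ?P (?P x) = ?P x"
  proof -
    fix x :: "real^'d \<Rightarrow> real" assume "x \<in> ?W"
    have "Qstep L k m j (Qstepadj L k m j (Qstep L k m j x)) = Qstep L k m j x"
      by (rule Qstep_Qstepadj[OF jm Qstep_sp])
    then show "?P (?P x) = ?P x" by simp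
  qed
  have f21: "\<And>x. x\<in>?V \<Longrightarrow> ?A' x = ?A x - B *\<^sub>R ?Qa (?Q x) + (B*c/(B+c)) *\<^sub>R ?Qa (?P (?Q x))"
  proof -
    fix x :: "real^'d \<Rightarrow> real" assume x: "x \<in> ?V"
    show "?A' x = ?A x - B *\<^sub>R ?Qa (?Q x) + (B*c/(B+c)) *\<^sub>R ?Qa (?P (?Q x))"
    proof
      fix y
      show "?A' x y = (?A x - B *\<^sub>R ?Qa (?Q x) + (B*c/(B+c)) *\<^sub>R ?Qa (?P (?Q x))) y"
      proof (cases "y \<in> Omega L k m")
        case False then show ?thesis by (simp add: Aop_def QOadj_def)
      next
        case True
        have "QOadj L k m (Suc j) (QO L k m (Suc j) x) = ?Qa (?P (?Q x))"
          by (simp add: QO_comp[OF jm] QOadj_comp[OF jm])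
        then show ?thesis using True BB' by (simp add: Aop_def B_def B'_def algebra_simps)
      qed
    qed
  qed
  have f22: "\<And>w. w\<in>?W \<Longrightarrow> ?S w = B *\<^sub>R w + c *\<^sub>R ?P w - B^2 *\<^sub>R ?Q (the_inv_into ?V ?A (?Qa w))"
  proof -
    fix w :: "real^'d \<Rightarrow> real" assume w: "w \<in> ?W"
    have B2: "(aj a L j / (real L ^ j * e)^2)^2 = (aj a L j)^2 / (real L ^ j * e)^4"
      by (simp add: power_divide flip: power_mult)
    show "?S w = B *\<^sub>R w + c *\<^sub>R ?P w - B^2 *\<^sub>R ?Q (the_inv_into ?V ?A (?Qa w))"
    proof
      fix y
      show "?S w y = (B *\<^sub>R w + c *\<^sub>R ?P w - B^2 *\<^sub>R ?Q (the_inv_into ?V ?A (?Qa w))) y"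
      proof (cases "y \<in> OmegaJ L k m j")
        case False then show ?thesis using w by (simp add: Cpre_def sp_def QO_def Qstepadj_def)
      next
        case True then show ?thesis
          by (simp add: Cpre_def Delta_def Geta_def inv_on_def B2 B_def c_def)
      qed
    qed
  qed
  interpret w: wb ?V ?W ?A ?A' ?Q ?Qa ?P ?S B c
    by (rule wb.intro[OF f1 f2 f3 f4 f5 f6 f7 f8 f9 f10 f11 f12 f13 f14 f15 f16 f17 f18 Bp cp f21 f22])
  have inv: "invertible_on (OmegaJ L k m j :: (real^'d) set) ?S"
    using w.S_bij by (simp add: invertible_on_def)
  have B2: "B^2 = (aj a L j)^2 / (real L ^ j * e)^4"
    by (simp add: B_def power_divide flip: power_mult)
  have "Geta L k m a mu0 (j + 1) f = (\<lambda>x. Term L k m a mu0 j f x + Geta L k m a mu0 j f x)"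
    if f: "f \<in> ?V" for f
  proof
    fix x
    show "Geta L k m a mu0 (j + 1) f x = Term L k m a mu0 j f x + Geta L k m a mu0 j f x"
      using w.main_id[OF f] by (simp add: Geta_def Term_def Cj_def inv_on_def B2 algebra_simps)
  qed
  then show ?thesis using inv by blast
qed

end


theorem mainTheorem7:
  fixes L k m :: nat and a mu0 :: real
  assumes "odd L" and "L > 1" and "k \<ge> 1" and "m \<ge> k"
    and "0 < a" and "a \<le> 1" and "mu0 \<ge> 0"
  shows "(\<forall>j\<in>{1..k-1}.
            invertible_on (OmegaJ L k m j :: (real^'d) set) (Cpre L k m a mu0 j)
          \<and> (\<forall>f\<in>sp (Omega L k m :: (real^'d) set).
               Geta L k m a mu0 (j + 1) f = (\<lambda>x. Term L k m a mu0 j f x + Geta L k m a mu0 j f x)))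
      \<and> (\<forall>f\<in>sp (Omega L k m :: (real^'d) set).
           GkOmega L k m a mu0 f = Geta L k m a mu0 k f
         \<and> Geta L k m a mu0 k f = (\<lambda>x. (\<Sum>j=1..<k. Term L k m a mu0 j f x) + Geta L k m a mu0 1 f x))"
proof -
  interpret latt L k m using assms(2) by unfold_locales
  have st: "\<And>j. 1 \<le> j \<Longrightarrow> Suc j \<le> k \<Longrightarrow>
      invertible_on (OmegaJ L k m j :: (real^'d) set) (Cpre L k m a mu0 j)
          \<and> (\<forall>f\<in>sp (Omega L k m :: (real^'d) set).
               Geta L k m a mu0 (j + 1) f = (\<lambda>x. Term L k m a mu0 j f x + Geta L k m a mu0 j f x))"
    by (rule step) (use assms in auto)
  have P1: "\<forall>j\<in>{1..k-1}.
            invertible_on (OmegaJ L k m j :: (real^'d) set) (Cpre L k m a mu0 j)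
          \<and> (\<forall>f\<in>sp (Omega L k m :: (real^'d) set).
               Geta L k m a mu0 (j + 1) f = (\<lambda>x. Term L k m a mu0 j f x + Geta L k m a mu0 j f x))"
  proof
    fix j assume "j \<in> {1..k-1}"
    then have "1 \<le> j" "Suc j \<le> k" by auto
    then show "invertible_on (OmegaJ L k m j :: (real^'d) set) (Cpre L k m a mu0 j)
          \<and> (\<forall>f\<in>sp (Omega L k m :: (real^'d) set).
               Geta L k m a mu0 (j + 1) f = (\<lambda>x. Term L k m a mu0 j f x + Geta L k m a mu0 j f x))"
      by (rule st)
  qed
  have opeq: "(\<lambda>f x. if x \<in> Omega L k m then
      - Lap L k m f x + mubar mu0 L k * f x
      + aj a L k * QOadj L k m k (QO L k m k f) x else 0) = (Aop L k m a mu0 k :: (real^'d \<Rightarrow> real) \<Rightarrow> _)"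
  proof (intro ext)
    fix f :: "real^'d \<Rightarrow> real" and x
    have "real L ^ k * eta L k = 1" using assms(2) by (simp add: eta_def)
    then show "(if x \<in> Omega L k m then
      - Lap L k m f x + mubar mu0 L k * f x
      + aj a L k * QOadj L k m k (QO L k m k f) x else 0) = Aop L k m a mu0 k f x"
      by (simp add: Aop_def)
  qed
  have G: "GkOmega L k m a mu0 = (Geta L k m a mu0 k :: (real^'d \<Rightarrow> real) \<Rightarrow> _)"
    unfolding GkOmega_def Geta_def opeq ..
  have ind: "\<And>i. 1 \<le> i \<Longrightarrow> i \<le> k \<Longrightarrow> (\<forall>f\<in>sp (Omega L k m :: (real^'d) set).
      Geta L k m a mu0 i f = (\<lambda>x. (\<Sum>j=1..<i. Term L k m a mu0 j f x) + Geta L k m a mu0 1 f x))"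
  proof -
    fix i :: nat
    show "1 \<le> i \<Longrightarrow> i \<le> k \<Longrightarrow> (\<forall>f\<in>sp (Omega L k m :: (real^'d) set).
      Geta L k m a mu0 i f = (\<lambda>x. (\<Sum>j=1..<i. Term L k m a mu0 j f x) + Geta L k m a mu0 1 f x))"
    proof (induction i)
      case 0 then show ?case by simp
    next
      case (Suc i)
      show ?case
      proof (cases "i = 0")
        case True then show ?thesis by simp
      next
        case False
        then have i1: "1 \<le> i" by simp
        have ik: "i \<le> k" using Suc.prems by simp
        note IH = Suc.IH[OF i1 ik]
        show ?thesis
        proof
          fix f :: "real^'d \<Rightarrow> real" assume f: "f \<in> sp (Omega L k m)"
          have "Geta L k m a mu0 (Suc i) f = (\<lambda>x. Term L k m a mu0 i f x + Geta L k m a mu0 i f x)"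
            using st[OF i1] Suc.prems f by simp
          also have "\<dots> = (\<lambda>x. Term L k m a mu0 i f x + ((\<Sum>j=1..<i. Term L k m a mu0 j f x) + Geta L k m a mu0 1 f x))"
            using IH f by simp
          also have "\<dots> = (\<lambda>x. (\<Sum>j=1..<Suc i. Term L k m a mu0 j f x) + Geta L k m a mu0 1 f x)"
            using i1 by (simp add: algebra_simps)
          finally show "Geta L k m a mu0 (Suc i) f = (\<lambda>x. (\<Sum>j=1..<Suc i. Term L k m a mu0 j f x) + Geta L k m a mu0 1 f x)" .
        qed
      qed
    qed
  qed
  have P2: "\<forall>f\<in>sp (Omega L k m :: (real^'d) set).
           GkOmega L k m a mu0 f = Geta L k m a mu0 k f
         \<and> Geta L k m a mu0 k f = (\<lambda>x. (\<Sum>j=1..<k. Term L k m a mu0 j f x) + Geta L k m a mu0 1 f x)"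
    using ind[OF assms(3) order_refl] G by simp
  show ?thesis using P1 P2 by blast
qed


end
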